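(* The space $\mathbf{PQSym}=\bigoplus_{n\ge1}K[PF_n]$ spanned by all parking functions, with the operations $f\bullet_\gamma g=(f\times g)\cdot\gamma$, is a shuffle algebra, and it is the free shuffle algebra on the graded set $PPF=\bigcup_{n\ge1}PPF_n$ of prime parking functions (an element of $PPF_n$ having degree $n$); that is, the shuffle algebra morphism from the free shuffle algebra on $PPF$ to $\mathbf{PQSym}$ which is the identity on $PPF$ is an isomorphism.
   Context: Permutations $\sigma\in S_n$ are written as words $(\sigma(1),\dots,\sigma(n))$; $1_n$ is the identity, and $\sigma\cdot\tau$ denotes composition, $(\sigma\cdot\tau)(i)=\sigma(\tau(i))$. For $\sigma\in S_n$, $\tau\in S_m$, $\sigma\times\tau\in S_{n+m}$ is $(\sigma(1),\dots,\sigma(n),\tau(1)+n,\dots,\tau(m)+n)$. For nonnegative integers $n_1,\dots,n_r$ with sum $n$, $Sh(n_1,\dots,n_r)$ is the set of $\sigma\in S_n$ such that $\sigma^{-1}(n_1+\dots+n_{k-1}+1)<\dots<\sigma^{-1}(n_1+\dots+n_k)$ for every $k$. A shuffle algebra is a graded vector space $A=\bigoplus_{n\ge0}A_n$ over a field $K$ with linear maps $\bullet_\gamma:A_n\otimes A_m\to A_{n+m}$ for all $n,m\ge0$ and $\gamma\in Sh(n,m)$, such that for $x\in A_n$, $y\in A_m$, $z\in A_r$ one has $x\bullet_\gamma(y\bullet_\delta z)=(x\bullet_\sigma y)\bullet_\lambda z$ whenever $\gamma\in Sh(n,m+r)$, $\delta\in Sh(m,r)$, $\sigma\in Sh(n,m)$,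 $\lambda\in Sh(n+m,r)$ satisfy $(1_n\times\delta)\cdot\gamma=(\sigma\times1_r)\cdot\lambda$. The free shuffle algebra on a positively graded set is the shuffle algebra with the usual universal property among degree-preserving maps. A parking function of size $n$ is a map $f:\{1,\dots,n\}\to\{1,\dots,n\}$ (written $(f(1),\dots,f(n))$) whose nondecreasing rearrangement $f^\uparrow$ satisfies $f^\uparrow(i)\le i$ for all $i$; $PF_n$ is the set of them, of degree $n$. For $f\in PF_n$, $g\in PF_m$: $f\times g=(f(1),\dots,f(n),g(1)+n,\dots,g(m)+n)$, and $(h\cdot\gamma)(i)=h(\gamma(i))$ for $\gamma\in S_{n+m}$. An integer $b\in\{0,\dots,n\}$ is a breakpoint of $f\in PF_n$ if $|\{i: f(i)\le b\}|=b$. A parking function is prime if its only breakpoints are $0$ and $n$; $PPF_n$ denotes the set of prime parking functions of size $n$. *)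

theory Defs
  imports "HOL.Vector_Spaces" "HOL-Combinatorics.Permutations" "HOL-Library.Function_Algebras"
begin

text \<open>A permutation of S_n is a function nat => nat which permutes {1..n}
(and is the identity elsewhere). Composition is function composition.\<close>

definition perm_times :: "nat \<Rightarrow> nat \<Rightarrow> (nat \<Rightarrow> nat) \<Rightarrow> (nat \<Rightarrow> nat) \<Rightarrow> (nat \<Rightarrow> nat)" where
  "perm_times n m \<sigma> \<tau> = (\<lambda>i. if 1 \<le> i \<and> i \<le> n then \<sigma> i
                              else if n < i \<and> i \<le> n + m then \<tau> (i - n) + n
                              else i)"

definition Sh :: "nat \<Rightarrow> nat \<Rightarrow> (nat \<Rightarrow> nat) set" where
  "Sh n m = {\<gamma>. \<gamma> permutes {1..n+m} \<and>
                 strict_mono_on {1..n} (inv \<gamma>) \<and>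
                 strict_mono_on {n+1..n+m} (inv \<gamma>)}"

text \<open>A shuffle algebra over the field 'k: the homogeneous components A_n are
subspaces V n of a 'k-vector space 'a (scalar multiplication sc); the products
mu n m \<gamma> : A_n \<times> A_m \<rightarrow> A_(n+m) are bilinear for \<gamma> in Sh(n,m), and satisfy the
shuffle associativity axiom.\<close>

definition lin_on :: "('k::field \<Rightarrow> 'a::ab_group_add \<Rightarrow> 'a) \<Rightarrow> ('k \<Rightarrow> 'b::ab_group_add \<Rightarrow> 'b)
                      \<Rightarrow> 'a set \<Rightarrow> ('a \<Rightarrow> 'b) \<Rightarrow> bool" where
  "lin_on sc1 sc2 S f \<longleftrightarrow>
     (\<forall>x\<in>S. \<forall>y\<in>S. f (x + y) = f x + f y) \<and> (\<forall>c. \<forall>x\<in>S. f (sc1 c x) = sc2 c (f x))"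

definition shuffle_alg :: "('k::field \<Rightarrow> 'a::ab_group_add \<Rightarrow> 'a) \<Rightarrow> (nat \<Rightarrow> 'a set)
       \<Rightarrow> (nat \<Rightarrow> nat \<Rightarrow> (nat \<Rightarrow> nat) \<Rightarrow> 'a \<Rightarrow> 'a \<Rightarrow> 'a) \<Rightarrow> bool" where
  "shuffle_alg sc V mu \<longleftrightarrow>
     vector_space sc \<and>
     (\<forall>n. module.subspace sc (V n)) \<and>
     (\<forall>n m \<gamma>. \<gamma> \<in> Sh n m \<longrightarrow>
        (\<forall>x\<in>V n. \<forall>y\<in>V m. mu n m \<gamma> x y \<in> V (n + m)) \<and>
        (\<forall>y\<in>V m. lin_on sc sc (V n) (\<lambda>x. mu n m \<gamma> x y)) \<and>
        (\<forall>x\<in>V n. lin_on sc sc (V m) (\<lambda>y. mu n m \<gamma> x y))) \<and>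
     (\<forall>n m r \<gamma> \<delta> \<sigma> lam. \<gamma> \<in> Sh n (m + r) \<and> \<delta> \<in> Sh m r \<and> \<sigma> \<in> Sh n m \<and> lam \<in> Sh (n + m) r \<and>
        perm_times n (m + r) id \<delta> \<circ> \<gamma> = perm_times (n + m) r \<sigma> id \<circ> lam \<longrightarrow>
        (\<forall>x\<in>V n. \<forall>y\<in>V m. \<forall>z\<in>V r.
           mu n (m + r) \<gamma> x (mu m r \<delta> y z) = mu (n + m) r lam (mu n m \<sigma> x y) z))"

definition shuffle_hom :: "('k::field \<Rightarrow> 'a::ab_group_add \<Rightarrow> 'a) \<Rightarrow> (nat \<Rightarrow> 'a set)
       \<Rightarrow> (nat \<Rightarrow> nat \<Rightarrow> (nat \<Rightarrow> nat) \<Rightarrow> 'a \<Rightarrow> 'a \<Rightarrow> 'a)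
       \<Rightarrow> ('k \<Rightarrow> 'b::ab_group_add \<Rightarrow> 'b) \<Rightarrow> (nat \<Rightarrow> 'b set)
       \<Rightarrow> (nat \<Rightarrow> nat \<Rightarrow> (nat \<Rightarrow> nat) \<Rightarrow> 'b \<Rightarrow> 'b \<Rightarrow> 'b)
       \<Rightarrow> (nat \<Rightarrow> 'a \<Rightarrow> 'b) \<Rightarrow> bool" where
  "shuffle_hom sc1 V1 mu1 sc2 V2 mu2 \<Phi> \<longleftrightarrow>
     (\<forall>n. (\<forall>x\<in>V1 n. \<Phi> n x \<in> V2 n) \<and> lin_on sc1 sc2 (V1 n) (\<Phi> n)) \<and>
     (\<forall>n m \<gamma>. \<gamma> \<in> Sh n m \<longrightarrow> (\<forall>x\<in>V1 n. \<forall>y\<in>V1 m.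
        \<Phi> (n + m) (mu1 n m \<gamma> x y) = mu2 n m \<gamma> (\<Phi> n x) (\<Phi> m y)))"

text \<open>Universal property of the free shuffle algebra on the positively graded
set G (G n = elements of degree n), with structure map \<iota>, tested against all
shuffle algebras whose underlying vector space lives in type 'b.\<close>

definition free_shuffle_alg_on :: "'b::ab_group_add itself
       \<Rightarrow> ('k::field \<Rightarrow> 'a::ab_group_add \<Rightarrow> 'a) \<Rightarrow> (nat \<Rightarrow> 'a set)
       \<Rightarrow> (nat \<Rightarrow> nat \<Rightarrow> (nat \<Rightarrow> nat) \<Rightarrow> 'a \<Rightarrow> 'a \<Rightarrow> 'a)
       \<Rightarrow> (nat \<Rightarrow> 'g set) \<Rightarrow> (nat \<Rightarrow> 'g \<Rightarrow> 'a) \<Rightarrow> bool" where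
  "free_shuffle_alg_on (TYPE('b)) sc V mu G \<iota> \<longleftrightarrow>
     shuffle_alg sc V mu \<and> G 0 = {} \<and> (\<forall>n. \<forall>g\<in>G n. \<iota> n g \<in> V n) \<and>
     (\<forall>(sc2 :: 'k \<Rightarrow> 'b \<Rightarrow> 'b) V2 mu2 (\<phi> :: nat \<Rightarrow> 'g \<Rightarrow> 'b).
        shuffle_alg sc2 V2 mu2 \<and> (\<forall>n. \<forall>g\<in>G n. \<phi> n g \<in> V2 n) \<longrightarrow>
        (\<exists>\<Phi>. shuffle_hom sc V mu sc2 V2 mu2 \<Phi> \<and> (\<forall>n. \<forall>g\<in>G n. \<Phi> n (\<iota> n g) = \<phi> n g) \<and>
           (\<forall>\<Psi>. shuffle_hom sc V mu sc2 V2 mu2 \<Psi> \<and> (\<forall>n. \<forall>g\<in>G n. \<Psi> n (\<iota> n g) = \<phi> n g)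
                 \<longrightarrow> (\<forall>n. \<forall>x\<in>V n. \<Psi> n x = \<Phi> n x))))"

text \<open>A parking function of size n is the word (f(1),...,f(n)), a list of length n.\<close>

definition is_pf :: "nat \<Rightarrow> nat list \<Rightarrow> bool" where
  "is_pf n f \<longleftrightarrow> length f = n \<and> set f \<subseteq> {1..n} \<and> (\<forall>i<n. sort f ! i \<le> i + 1)"

definition PF :: "nat \<Rightarrow> nat list set" where
  "PF n = {f. is_pf n f}"

definition is_breakpoint :: "nat \<Rightarrow> nat list \<Rightarrow> nat \<Rightarrow> bool" where
  "is_breakpoint n f b \<longleftrightarrow> b \<le> n \<and> card {i\<in>{1..n}. f ! (i - 1) \<le> b} = b"

definition PPF :: "nat \<Rightarrow> nat list set" where
  "PPF n = {f. n \<ge> 1 \<and> is_pf n f \<and> (\<forall>b. is_breakpoint n f b \<longrightarrow> b = 0 \<or> b = n)}"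

definition pf_times :: "nat \<Rightarrow> nat list \<Rightarrow> nat list \<Rightarrow> nat list" where
  "pf_times n f g = f @ map (\<lambda>x. x + n) g"

definition pf_act :: "nat list \<Rightarrow> (nat \<Rightarrow> nat) \<Rightarrow> nat list" where
  "pf_act h \<gamma> = map (\<lambda>i. h ! (\<gamma> i - 1)) [1..<length h + 1]"

text \<open>Elements of PQSym are 'k-valued functions on words; the degree n component
is K[PF_n] for n \<ge> 1 (functions supported on PF n) and 0 for n = 0.\<close>

definition PQ_V :: "nat \<Rightarrow> (nat list \<Rightarrow> 'k::field) set" where
  "PQ_V n = {x. \<forall>w. x w \<noteq> 0 \<longrightarrow> n \<ge> 1 \<and> w \<in> PF n}"

definition PQ_scale :: "'k::field \<Rightarrow> (nat list \<Rightarrow> 'k) \<Rightarrow> (nat list \<Rightarrow> 'k)" where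
  "PQ_scale c x = (\<lambda>w. c * x w)"

definition PQ_basis :: "nat \<Rightarrow> nat list \<Rightarrow> (nat list \<Rightarrow> 'k::field)" where
  "PQ_basis n f = (\<lambda>w. if w = f then 1 else 0)"

text \<open>Bilinear extension of f \<bullet>_\<gamma> g = (f \<times> g) . \<gamma>.\<close>
definition PQ_mult :: "nat \<Rightarrow> nat \<Rightarrow> (nat \<Rightarrow> nat) \<Rightarrow> (nat list \<Rightarrow> 'k::field)
                        \<Rightarrow> (nat list \<Rightarrow> 'k) \<Rightarrow> (nat list \<Rightarrow> 'k)" where
  "PQ_mult n m \<gamma> x y = (\<lambda>h. \<Sum>p\<in>PF n \<times> PF m.
        if pf_act (pf_times n (fst p) (snd p)) \<gamma> = h then x (fst p) * y (snd p) else 0)"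

end

theory Submission
  imports Defs
begin

definition incr_on :: "(nat \<Rightarrow> nat) \<Rightarrow> nat \<Rightarrow> nat set \<Rightarrow> bool" where
  "incr_on p N A \<longleftrightarrow> (\<forall>i\<in>{1..N}. \<forall>i'\<in>{1..N}. p i \<in> A \<longrightarrow> p i' \<in> A \<longrightarrow> p i < p i' \<longrightarrow> i < i')"

definition rk :: "nat set \<Rightarrow> nat \<Rightarrow> nat" where
  "rk S i = card {j\<in>S. j \<le> i}"

definition shuf :: "nat \<Rightarrow> nat \<Rightarrow> nat set \<Rightarrow> nat \<Rightarrow> nat" where
  "shuf b N S = (\<lambda>i. if i \<in> {1..N} then (if i \<in> S then rk S i else b + rk ({1..N} - S) i) else i)"

lemma smi_iff:
  assumes p: "p permutes {1..N}" and A: "A \<subseteq> {1..N}"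
  shows "strict_mono_on A (inv p) \<longleftrightarrow> incr_on p N A"
proof
  assume h: "strict_mono_on A (inv p)"
  show "incr_on p N A" unfolding incr_on_def
  proof (intro ballI impI)
    fix i i' assume "i \<in> {1..N}" "i' \<in> {1..N}" "p i \<in> A" "p i' \<in> A" "p i < p i'"
    then have "inv p (p i) < inv p (p i')" using h by (simp add: strict_mono_on_def)
    then show "i < i'" using permutes_inverses(2)[OF p] by simp
  qed
next
  assume h: "incr_on p N A"
  show "strict_mono_on A (inv p)" unfolding strict_mono_on_def
  proof (intro allI impI)
    fix r s assume rs: "r \<in> A \<and> s \<in> A \<and> r < s"
    have "inv p r \<in> {1..N}" "inv p s \<in> {1..N}"
      using rs A permutes_in_image[OF permutes_inv[OF p]] by auto
    moreover have "p (inv p r) = r" "p (inv p s) = s" using permutes_inverses(1)[OF p] by auto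
    ultimately show "inv p r < inv p s" using h rs unfolding incr_on_def by metis
  qed
qed

lemma Sh_iff: "\<gamma> \<in> Sh b c \<longleftrightarrow> \<gamma> permutes {1..b+c} \<and> incr_on \<gamma> (b+c) {1..b} \<and> incr_on \<gamma> (b+c) {b+1..b+c}"
  unfolding Sh_def using smi_iff[of \<gamma> "b+c" "{1..b}"] smi_iff[of \<gamma> "b+c" "{b+1..b+c}"]
  by auto

lemma rk_mono: "finite S \<Longrightarrow> i \<le> i' \<Longrightarrow> rk S i \<le> rk S i'"
  unfolding rk_def by (rule card_mono) auto

lemma rk_strict: assumes "finite S" "i' \<in> S" "i < i'" shows "rk S i < rk S i'"
  unfolding rk_def
proof (rule psubset_card_mono)
  show "finite {j \<in> S. j \<le> i'}" using assms by auto
  have "i' \<notin> {j \<in> S. j \<le> i}" "i' \<in> {j \<in> S. j \<le> i'}" using assms by auto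
  then have "{j \<in> S. j \<le> i} \<noteq> {j \<in> S. j \<le> i'}" by blast
  then show "{j \<in> S. j \<le> i} \<subset> {j \<in> S. j \<le> i'}" using assms by auto
qed

lemma rk_pos: "finite S \<Longrightarrow> i \<in> S \<Longrightarrow> 1 \<le> rk S i"
  unfolding rk_def using card_gt_0_iff[of "{j\<in>S. j \<le> i}"] by fastforce

lemma rk_le: "finite S \<Longrightarrow> rk S i \<le> card S"
  unfolding rk_def by (rule card_mono) auto

lemma rank:
  assumes p: "p permutes {1..N}" and inc: "incr_on p N {a+1..a+k}" and ak: "a + k \<le> N"
    and i: "i \<in> {1..N}" "p i \<in> {a+1..a+k}"
  shows "p i = a + rk {j\<in>{1..N}. p j \<in> {a+1..a+k}} i"
proof -
  let ?T = "{j\<in>{1..N}. p j \<in> {a+1..a+k}}"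
  have img: "p ` {j\<in>?T. j \<le> i} = {a+1..p i}"
  proof
    show "p ` {j\<in>?T. j \<le> i} \<subseteq> {a+1..p i}"
    proof
      fix y assume "y \<in> p ` {j\<in>?T. j \<le> i}"
      then obtain j where j: "j \<in> ?T" "j \<le> i" "y = p j" by auto
      have "\<not> p i < p j"
      proof
        assume "p i < p j"
        then have "i < j" using inc i j unfolding incr_on_def by blast
        then show False using j by simp
      qed
      then show "y \<in> {a+1..p i}" using j by auto
    qed
  next
    show "{a+1..p i} \<subseteq> p ` {j\<in>?T. j \<le> i}"
    proof
      fix y assume y: "y \<in> {a+1..p i}"
      then have yN: "y \<in> {1..N}" using i ak by auto
      define j where "j = inv p y"
      have j: "j \<in> {1..N}" "p j = y"
        using permutes_in_image[OF permutes_inv[OF p]] yN permutes_inverses(1)[OF p]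
        unfolding j_def by auto
      have "j \<le> i"
      proof (cases "y = p i")
        case True
        then have "j = i" using j permutes_inverses(2)[OF p] unfolding j_def by metis
        then show ?thesis by simp
      next
        case False
        then have "p j < p i" using y j by auto
        moreover have "p j \<in> {a+1..a+k}" using y j i by auto
        ultimately have "j < i" using inc i j unfolding incr_on_def by blast
        then show ?thesis by simp
      qed
      then show "y \<in> p ` {j\<in>?T. j \<le> i}" using j y i by auto
    qed
  qed
  have inj: "inj_on p {j\<in>?T. j \<le> i}" using permutes_inj[OF p] inj_on_subset by blast
  have "card {j\<in>?T. j \<le> i} = card {a+1..p i}" using card_image[OF inj] img by simp
  also have "\<dots> = p i - a" by simp
  finally have "rk ?T i = p i - a" unfolding rk_def .
  then show ?thesis using i by simp
qed

lemma shuf_Sh: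
  assumes S: "S \<subseteq> {1..N}" and cS: "card S = b"
  shows "shuf b N S \<in> Sh b (N - b)" and "\<And>i. i \<in> {1..N} \<Longrightarrow> shuf b N S i \<le> b \<longleftrightarrow> i \<in> S"
proof -
  let ?C = "{1..N} - S"
  let ?g = "shuf b N S"
  have fS: "finite S" using S finite_subset by blast
  have fC: "finite ?C" by simp
  have bN: "b \<le> N" using cS card_mono[OF _ S] by fastforce
  have cC: "card ?C = N - b" using card_Diff_subset[OF fS S] cS by simp
  have gS: "?g i = rk S i" if "i \<in> S" for i using that S unfolding shuf_def by auto
  have gC: "?g i = b + rk ?C i" if "i \<in> ?C" for i using that unfolding shuf_def by auto
  have gout: "?g i = i" if "i \<notin> {1..N}" for i using that unfolding shuf_def by auto
  have rS: "1 \<le> rk S i \<and> rk S i \<le> b" if "i \<in> S" for i using rk_pos[OF fS that] rk_le[OF fS] cS by auto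
  have rC: "1 \<le> rk ?C i \<and> rk ?C i \<le> N - b" if "i \<in> ?C" for i using rk_pos[OF fC that] rk_le[OF fC] cC by metis
  show val: "?g i \<le> b \<longleftrightarrow> i \<in> S" if "i \<in> {1..N}" for i
  proof (cases "i \<in> S")
    case True then show ?thesis using gS rS by simp
  next
    case False
    then have "i \<in> ?C" using that by simp
    then show ?thesis using gC[OF \<open>i \<in> ?C\<close>] rC[OF \<open>i \<in> ?C\<close>] False by simp
  qed
  have into: "?g ` {1..N} \<subseteq> {1..N}"
  proof
    fix y assume "y \<in> ?g ` {1..N}"
    then obtain i where i: "i \<in> {1..N}" "y = ?g i" by auto
    show "y \<in> {1..N}"
    proof (cases "i \<in> S")
      case True
      then show ?thesis using i(2) gS[OF True] rS[OF True] bN by simp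
    next
      case False
      then have iC: "i \<in> ?C" using i by simp
      then show ?thesis using i(2) gC[OF iC] rC[OF iC] bN by (simp, linarith)
    qed
  qed
  have monoS: "?g i < ?g i'" if "i \<in> S" "i' \<in> S" "i < i'" for i i'
    using that gS rk_strict[OF fS] by simp
  have monoC: "?g i < ?g i'" if "i \<in> ?C" "i' \<in> ?C" "i < i'" for i i'
    using that gC rk_strict[OF fC, of i' i] by simp
  have mixed: "?g i < ?g i'" if "i \<in> S" "i' \<in> ?C" for i i'
    using gS[OF that(1)] gC[OF that(2)] rS[OF that(1)] rC[OF that(2)] by simp
  have ne: "?g x \<noteq> ?g x'" if x: "x \<in> {1..N}" "x' \<in> {1..N}" "x < x'" for x x'
  proof (cases "x \<in> S")
    case True
    show ?thesis
    proof (cases "x' \<in> S")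
      case True
      then show ?thesis using monoS[OF \<open>x \<in> S\<close> True x(3)] by simp
    next
      case False
      then have "x' \<in> ?C" using x by simp
      then show ?thesis using mixed[OF \<open>x \<in> S\<close>] by fastforce
    qed
  next
    case False
    then have xC: "x \<in> ?C" using x by simp
    show ?thesis
    proof (cases "x' \<in> S")
      case True
      then show ?thesis using mixed[OF True xC] by fastforce
    next
      case False
      then have "x' \<in> ?C" using x by simp
      then show ?thesis using monoC[OF xC _ x(3)] by fastforce
    qed
  qed
  have inj: "inj_on ?g {1..N}"
  proof (rule inj_onI)
    fix i i' assume i: "i \<in> {1..N}" and i': "i' \<in> {1..N}" and eq: "?g i = ?g i'"
    show "i = i'"
    proof (rule ccontr)
      assume "i \<noteq> i'"
      then consider "i < i'" | "i' < i" by linarith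
      then show False
      proof cases
        case 1 then show False using ne[OF i i'] eq by simp
      next
        case 2 then show False using ne[OF i' i] eq by simp
      qed
    qed
  qed
  have "?g ` {1..N} = {1..N}" using endo_inj_surj[OF _ into inj] by simp
  then have "bij_betw ?g {1..N} {1..N}" using inj by (simp add: bij_betw_def)
  then have perm: "?g permutes {1..N}" using gout by (intro bij_imp_permutes) auto
  have inc1: "incr_on ?g N {1..b}" unfolding incr_on_def
  proof (intro ballI impI)
    fix i i' assume i: "i \<in> {1..N}" "i' \<in> {1..N}" "?g i \<in> {1..b}" "?g i' \<in> {1..b}" "?g i < ?g i'"
    then have "i \<in> S" "i' \<in> S" using val by auto
    then have "rk S i < rk S i'" using i(5) gS by simp
    then show "i < i'" using rk_mono[OF fS, of i' i] by linarith
  qed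
  have inc2: "incr_on ?g N {b+1..N}" unfolding incr_on_def
  proof (intro ballI impI)
    fix i i' assume i: "i \<in> {1..N}" "i' \<in> {1..N}" "?g i \<in> {b+1..N}" "?g i' \<in> {b+1..N}" "?g i < ?g i'"
    then have "\<not> ?g i \<le> b" "\<not> ?g i' \<le> b" by auto
    then have "i \<in> ?C" "i' \<in> ?C" using val[OF i(1)] val[OF i(2)] i(1,2) by auto
    then have "rk ?C i < rk ?C i'" using i(5) gC by simp
    then show "i < i'" using rk_mono[OF fC, of i' i] by linarith
  qed
  show "?g \<in> Sh b (N - b)" unfolding Sh_iff using perm inc1 inc2 bN by simp
qed

lemma Sh_shuf:
  assumes g: "\<gamma> \<in> Sh b c"
  shows "\<gamma> = shuf b (b+c) {i\<in>{1..b+c}. \<gamma> i \<le> b}"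
proof
  fix i
  let ?N = "b + c"
  let ?S = "{i\<in>{1..?N}. \<gamma> i \<le> b}"
  have p: "\<gamma> permutes {1..?N}" and inc1': "incr_on \<gamma> ?N {1..b}" and inc2: "incr_on \<gamma> ?N {b+1..b+c}"
    using g unfolding Sh_iff by auto
  have inc1: "incr_on \<gamma> ?N {0+1..0+b}" using inc1' by simp
  have im: "\<gamma> j \<in> {1..?N}" if "j \<in> {1..?N}" for j using permutes_in_image[OF p] that by simp
  show "\<gamma> i = shuf b ?N ?S i"
  proof (cases "i \<in> {1..?N}")
    case False
    then have "\<gamma> i = i" using permutes_not_in[OF p] by simp
    moreover have "shuf b ?N ?S i = i" unfolding shuf_def if_not_P[OF False] by simp
    ultimately show ?thesis by simp
  next
    case True
    show ?thesis
    proof (cases "\<gamma> i \<le> b")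
      case le: True
      have iS: "i \<in> ?S" using True le by simp
      have "\<gamma> i \<in> {0+1..0+b}" using im[OF True] le by simp
      then have "\<gamma> i = 0 + rk {j\<in>{1..?N}. \<gamma> j \<in> {0+1..0+b}} i"
        using rank[OF p inc1 _ True] by simp
      moreover have "{j\<in>{1..?N}. \<gamma> j \<in> {0+1..0+b}} = ?S" using im by force
      ultimately have "\<gamma> i = rk ?S i" by simp
      then show ?thesis using True iS unfolding shuf_def by simp
    next
      case gt: False
      have iS: "i \<notin> ?S" using gt by simp
      have "\<gamma> i \<in> {b+1..b+c}" using im[OF True] gt by simp
      then have "\<gamma> i = b + rk {j\<in>{1..?N}. \<gamma> j \<in> {b+1..b+c}} i"
        using rank[OF p inc2 _ True] by simp
      moreover have "{j\<in>{1..?N}. \<gamma> j \<in> {b+1..b+c}} = {1..?N} - ?S" using im by force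
      ultimately have "\<gamma> i = b + rk ({1..?N} - ?S) i" by simp
      then show ?thesis using True iS unfolding shuf_def by simp
    qed
  qed
qed

lemma mem_shift: "(i::nat) \<in> {1..n+m} \<Longrightarrow> \<not> i \<le> n \<Longrightarrow> i - n \<in> {1..m}"
  by auto

lemma perm_from_inj:
  assumes "f ` {1..N} \<subseteq> {1..(N::nat)}" "inj_on f {1..N}" "\<And>x. x \<notin> {1..N} \<Longrightarrow> f x = x"
  shows "f permutes {1..N}"
proof -
  have "f ` {1..N} = {1..N}" using endo_inj_surj[OF _ assms(1,2)] by simp
  then have "bij_betw f {1..N} {1..N}" using assms(2) by (simp add: bij_betw_def)
  then show ?thesis using assms(3) by (intro bij_imp_permutes) auto
qed

lemma incr_mono:
  assumes p: "p permutes {1..N}" and inc: "incr_on p N A"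
    and i: "i \<in> {1..N}" "i' \<in> {1..N}" "p i \<in> A" "p i' \<in> A" "i < i'"
  shows "p i < p i'"
proof (rule ccontr)
  assume "\<not> p i < p i'"
  then consider "p i = p i'" | "p i' < p i" by linarith
  then show False
  proof cases
    case 1
    then have "i = i'" using permutes_inj[OF p] by (simp add: inj_eq)
    then show False using i by simp
  next
    case 2
    then have "i' < i" using inc i unfolding incr_on_def by blast
    then show False using i by simp
  qed
qed

lemma perm_times_permutes:
  assumes s: "\<sigma> permutes {1..n}" and t: "\<tau> permutes {1..m}"
  shows "perm_times n m \<sigma> \<tau> permutes {1..n+m}"
proof (rule perm_from_inj)
  let ?f = "perm_times n m \<sigma> \<tau>"
  have s1: "\<sigma> i \<in> {1..n}" if "i \<in> {1..n}" for i using permutes_in_image[OF s] that by simp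
  have t1: "\<tau> i \<in> {1..m}" if "i \<in> {1..m}" for i using permutes_in_image[OF t] that by simp
  have lo: "?f i = \<sigma> i" if "i \<in> {1..n}" for i using that unfolding perm_times_def by simp
  have hi: "?f i = \<tau> (i - n) + n" if "i \<in> {n+1..n+m}" for i using that unfolding perm_times_def by simp
  show "?f ` {1..n+m} \<subseteq> {1..n+m}"
  proof
    fix y assume "y \<in> ?f ` {1..n+m}"
    then obtain i where i: "i \<in> {1..n+m}" "y = ?f i" by auto
    show "y \<in> {1..n+m}"
    proof (cases "i \<le> n")
      case True
      then show ?thesis using i lo[of i] s1[of i] by simp
    next
      case False
      then have "i - n \<in> {1..m}" using i mem_shift by blast
      then show ?thesis using i hi[of i] t1[of "i-n"] False by simp
    qed
  qed
  show "inj_on ?f {1..n+m}"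
  proof (rule inj_onI)
    fix i j assume i: "i \<in> {1..n+m}" and j: "j \<in> {1..n+m}" and eq: "?f i = ?f j"
    show "i = j"
    proof (cases "i \<le> n"; cases "j \<le> n")
      assume "i \<le> n" "j \<le> n"
      then show ?thesis using eq lo[of i] lo[of j] i j permutes_inj[OF s] by (simp add: inj_eq)
    next
      assume a: "i \<le> n" "\<not> j \<le> n"
      then have "j - n \<in> {1..m}" using j mem_shift by blast
      then show ?thesis using a eq lo[of i] hi[of j] i j s1[of i] t1[of "j-n"] by simp
    next
      assume a: "\<not> i \<le> n" "j \<le> n"
      then have "i - n \<in> {1..m}" using i mem_shift by blast
      then show ?thesis using a eq lo[of j] hi[of i] i j s1[of j] t1[of "i-n"] by simp
    next
      assume a: "\<not> i \<le> n" "\<not> j \<le> n"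
      then have "\<tau> (i - n) = \<tau> (j - n)" using eq hi[of i] hi[of j] i j by simp
      then have "i - n = j - n" using permutes_inj[OF t] by (simp add: inj_eq)
      then show ?thesis using a by simp
    qed
  qed
  show "?f x = x" if "x \<notin> {1..n+m}" for x using that unfolding perm_times_def by auto
qed

lemma Lfix:
  assumes p: "d' permutes {1..b+(c+d)}" and fx: "\<And>j. j \<in> {1..b} \<Longrightarrow> d' j = j"
    and inc1: "incr_on d' (b+(c+d)) {b+1..b+c}" and inc2: "incr_on d' (b+(c+d)) {b+c+1..b+(c+d)}"
  shows "\<exists>\<delta>\<in>Sh c d. perm_times b (c+d) id \<delta> = d'"
proof -
  let ?e = "c + d"
  define \<delta> where "\<delta> = (\<lambda>j. if j \<in> {1..?e} then d' (j+b) - b else j)"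
  have rng: "d' (j+b) \<in> {b+1..b+?e}" if j: "j \<in> {1..?e}" for j
  proof -
    have in1: "d' (j+b) \<in> {1..b+?e}" using permutes_in_image[OF p] j by simp
    have "\<not> d' (j+b) \<le> b"
    proof
      assume le: "d' (j+b) \<le> b"
      then have "d' (d' (j+b)) = d' (j+b)" using fx in1 by simp
      then have "d' (j+b) = j+b" using permutes_inj[OF p] by (simp add: inj_eq)
      then show False using le j by simp
    qed
    then show ?thesis using in1 by simp
  qed
  have dj: "\<delta> j + b = d' (j+b)" "\<delta> j \<in> {1..?e}" if j: "j \<in> {1..?e}" for j
    using rng[OF j] j unfolding \<delta>_def by auto
  have perm: "\<delta> permutes {1..?e}"
  proof (rule perm_from_inj)
    show "\<delta> ` {1..?e} \<subseteq> {1..?e}" using dj(2) by auto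
    show "inj_on \<delta> {1..?e}"
    proof (rule inj_onI)
      fix x y assume x: "x \<in> {1..?e}" and y: "y \<in> {1..?e}" and eq: "\<delta> x = \<delta> y"
      then have "d' (x+b) = d' (y+b)" using dj(1)[OF x] dj(1)[OF y] by simp
      then have "x + b = y + b" using permutes_inj[OF p] by (simp add: inj_eq)
      then show "x = y" by simp
    qed
    show "\<delta> x = x" if "x \<notin> {1..?e}" for x unfolding \<delta>_def if_not_P[OF that] by simp
  qed
  have eq: "perm_times b ?e id \<delta> = d'"
  proof
    fix i
    show "perm_times b ?e id \<delta> i = d' i"
    proof (cases "1 \<le> i \<and> i \<le> b")
      case True
      then show ?thesis using fx[of i] unfolding perm_times_def by simp
    next
      case False
      show ?thesis
      proof (cases "b < i \<and> i \<le> b + ?e")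
        case True
        then have "i - b \<in> {1..?e}" by auto
        then have "\<delta> (i - b) + b = d' i" using dj(1)[of "i-b"] True by simp
        then show ?thesis using True False unfolding perm_times_def by simp
      next
        case F2: False
        then have "i \<notin> {1..b+?e}" using False by auto
        then have "d' i = i" using permutes_not_in[OF p] by simp
        then show ?thesis unfolding perm_times_def if_not_P[OF False] if_not_P[OF F2] by simp
      qed
    qed
  qed
  have i1: "incr_on \<delta> ?e {1..c}" unfolding incr_on_def
  proof (intro ballI impI)
    fix j j' assume j: "j \<in> {1..?e}" "j' \<in> {1..?e}" "\<delta> j \<in> {1..c}" "\<delta> j' \<in> {1..c}" "\<delta> j < \<delta> j'"
    have "d' (j+b) \<in> {b+1..b+c}" "d' (j'+b) \<in> {b+1..b+c}" "d' (j+b) < d' (j'+b)"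
      using dj[OF j(1)] dj[OF j(2)] j(3-5) by auto
    moreover have "j+b \<in> {1..b+?e}" "j'+b \<in> {1..b+?e}" using j by auto
    ultimately have "j + b < j' + b" using inc1 unfolding incr_on_def by blast
    then show "j < j'" by simp
  qed
  have i2: "incr_on \<delta> ?e {c+1..c+d}" unfolding incr_on_def
  proof (intro ballI impI)
    fix j j' assume j: "j \<in> {1..?e}" "j' \<in> {1..?e}" "\<delta> j \<in> {c+1..c+d}" "\<delta> j' \<in> {c+1..c+d}" "\<delta> j < \<delta> j'"
    have "d' (j+b) \<in> {b+c+1..b+?e}" "d' (j'+b) \<in> {b+c+1..b+?e}" "d' (j+b) < d' (j'+b)"
      using dj[OF j(1)] dj[OF j(2)] j(3-5) by auto
    moreover have "j+b \<in> {1..b+?e}" "j'+b \<in> {1..b+?e}" using j by auto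
    ultimately have "j + b < j' + b" using inc2 unfolding incr_on_def by blast
    then show "j < j'" by simp
  qed
  have "\<delta> \<in> Sh c d" unfolding Sh_iff using perm i1 i2 by simp
  then show ?thesis using eq by blast
qed

lemma factor:
  assumes a: "\<alpha> \<in> Sh b c" and g: "\<gamma> \<in> Sh (b+c) d"
  shows "\<exists>\<gamma>2 \<delta>. \<gamma>2 \<in> Sh b (c+d) \<and> \<delta> \<in> Sh c d \<and>
           perm_times b (c+d) id \<delta> \<circ> \<gamma>2 = perm_times (b+c) d \<alpha> id \<circ> \<gamma>"
proof -
  let ?N = "b + c + d"
  let ?A = "perm_times (b+c) d \<alpha> id"
  let ?\<pi> = "?A \<circ> \<gamma>"
  have ap: "\<alpha> permutes {1..b+c}" and ai1: "incr_on \<alpha> (b+c) {1..b}" and ai2: "incr_on \<alpha> (b+c) {b+1..b+c}"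
    using a unfolding Sh_iff by auto
  have gp: "\<gamma> permutes {1..?N}" and gi1: "incr_on \<gamma> ?N {1..b+c}" and gi2: "incr_on \<gamma> ?N {b+c+1..b+c+d}"
    using g unfolding Sh_iff by auto
  have Ap: "?A permutes {1..?N}" using perm_times_permutes[OF ap permutes_id[of "{1..d}"]] by simp
  have pp: "?\<pi> permutes {1..?N}" using permutes_compose[OF gp Ap] .
  have Alo: "?A k = \<alpha> k" if "k \<in> {1..b+c}" for k using that unfolding perm_times_def by simp
  have Ahi: "?A k = k" if "k \<in> {b+c+1..?N}" for k using that unfolding perm_times_def by auto
  have aim: "\<alpha> k \<in> {1..b+c}" if "k \<in> {1..b+c}" for k using permutes_in_image[OF ap] that by simp
  have gim: "\<gamma> k \<in> {1..?N}" if "k \<in> {1..?N}" for k using permutes_in_image[OF gp] that by simp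
  have pim: "?\<pi> k \<in> {1..?N}" if "k \<in> {1..?N}" for k using permutes_in_image[OF pp] that by simp
  have plo: "\<gamma> i \<in> {1..b+c} \<and> ?\<pi> i = \<alpha> (\<gamma> i)" if "i \<in> {1..?N}" "?\<pi> i \<le> b + c" for i
  proof -
    have "\<gamma> i \<in> {1..b+c}"
    proof (rule ccontr)
      assume "\<gamma> i \<notin> {1..b+c}"
      then have "\<gamma> i \<in> {b+c+1..?N}" using gim[OF that(1)] by auto
      then have "?\<pi> i = \<gamma> i" using Ahi by simp
      then show False using that \<open>\<gamma> i \<in> {b+c+1..?N}\<close> by simp
    qed
    then show ?thesis using Alo by simp
  qed
  have phi: "\<gamma> i \<in> {b+c+1..?N} \<and> ?\<pi> i = \<gamma> i" if "i \<in> {1..?N}" "\<not> ?\<pi> i \<le> b + c" for i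
  proof -
    have "\<gamma> i \<in> {b+c+1..?N}"
    proof (rule ccontr)
      assume "\<gamma> i \<notin> {b+c+1..?N}"
      then have "\<gamma> i \<in> {1..b+c}" using gim[OF that(1)] by auto
      then have "?\<pi> i = \<alpha> (\<gamma> i)" using Alo by simp
      then show False using that aim[OF \<open>\<gamma> i \<in> {1..b+c}\<close>] by simp
    qed
    then show ?thesis using Ahi by simp
  qed
  have pi_blk: "incr_on ?\<pi> ?N B" if B: "B \<subseteq> {1..b+c}" "incr_on \<alpha> (b+c) B" for B
    unfolding incr_on_def
  proof (intro ballI impI)
    fix i i' assume i: "i \<in> {1..?N}" "i' \<in> {1..?N}" "?\<pi> i \<in> B" "?\<pi> i' \<in> B" "?\<pi> i < ?\<pi> i'"
    have l1: "\<gamma> i \<in> {1..b+c} \<and> ?\<pi> i = \<alpha> (\<gamma> i)" using plo[OF i(1)] i(3) B(1) by auto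
    have l2: "\<gamma> i' \<in> {1..b+c} \<and> ?\<pi> i' = \<alpha> (\<gamma> i')" using plo[OF i(2)] i(4) B(1) by auto
    have "\<gamma> i < \<gamma> i'" using B(2) l1 l2 i(3-5) unfolding incr_on_def by metis
    then show "i < i'" using gi1 l1 l2 i(1,2) unfolding incr_on_def by blast
  qed
  have pi1: "incr_on ?\<pi> ?N {1..b}" using pi_blk[OF _ ai1] by auto
  have pi2: "incr_on ?\<pi> ?N {b+1..b+c}" using pi_blk[OF _ ai2] by auto
  have pi3: "incr_on ?\<pi> ?N {b+c+1..?N}" unfolding incr_on_def
  proof (intro ballI impI)
    fix i i' assume i: "i \<in> {1..?N}" "i' \<in> {1..?N}" "?\<pi> i \<in> {b+c+1..?N}" "?\<pi> i' \<in> {b+c+1..?N}" "?\<pi> i < ?\<pi> i'"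
    have l1: "\<gamma> i \<in> {b+c+1..?N} \<and> ?\<pi> i = \<gamma> i" using phi[OF i(1)] i(3) by auto
    have l2: "\<gamma> i' \<in> {b+c+1..?N} \<and> ?\<pi> i' = \<gamma> i'" using phi[OF i(2)] i(4) by auto
    show "i < i'" using gi2 l1 l2 i unfolding incr_on_def by auto
  qed
  define S where "S = {i\<in>{1..?N}. ?\<pi> i \<le> b}"
  have SN: "S \<subseteq> {1..?N}" unfolding S_def by auto
  have imS: "?\<pi> ` S = {1..b}"
  proof
    show "?\<pi> ` S \<subseteq> {1..b}" using pim unfolding S_def by force
    show "{1..b} \<subseteq> ?\<pi> ` S"
    proof
      fix y assume y: "y \<in> {1..b}"
      have "inv ?\<pi> y \<in> {1..?N}" using permutes_in_image[OF permutes_inv[OF pp]] y by simp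
      moreover have "?\<pi> (inv ?\<pi> y) = y" using permutes_inverses(1)[OF pp] by simp
      ultimately show "y \<in> ?\<pi> ` S" using y unfolding S_def by (metis (mono_tags, lifting) atLeastAtMost_iff image_eqI mem_Collect_eq)
    qed
  qed
  have cS: "card S = b"
  proof -
    have "inj_on ?\<pi> S" using permutes_inj[OF pp] inj_on_subset by blast
    then have "card S = card (?\<pi> ` S)" using card_image by metis
    then show ?thesis using imS by simp
  qed
  define g2 where "g2 = shuf b ?N S"
  have g2Sh: "g2 \<in> Sh b (?N - b)" and g2v: "\<And>i. i \<in> {1..?N} \<Longrightarrow> g2 i \<le> b \<longleftrightarrow> i \<in> S"
    using shuf_Sh[OF SN cS] unfolding g2_def by auto
  have g2Sh': "g2 \<in> Sh b (c+d)" using g2Sh by (simp add: add.assoc)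
  have g2p: "g2 permutes {1..?N}" using g2Sh unfolding Sh_iff by (simp add: add.assoc)
  have g2inc2: "incr_on g2 ?N {b+1..?N}" using g2Sh unfolding Sh_iff by (simp add: add.assoc)
  have g2S: "g2 i = ?\<pi> i" if "i \<in> S" for i
  proof -
    have i: "i \<in> {1..?N}" "?\<pi> i \<in> {0+1..0+b}" using that pim unfolding S_def by auto
    have inc: "incr_on ?\<pi> ?N {0+1..0+b}" using pi1 by simp
    have e1: "?\<pi> i = 0 + rk {j\<in>{1..?N}. ?\<pi> j \<in> {0+1..0+b}} i"
      by (rule rank[OF pp inc _ i]) simp
    have e2: "{j\<in>{1..?N}. ?\<pi> j \<in> {0+1..0+b}} = S" unfolding S_def using pim by force
    have e3: "?\<pi> i = rk S i" using e1 e2 by (metis add_0)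
    have "g2 i = rk S i" using that SN unfolding g2_def shuf_def by auto
    then show ?thesis using e3 by simp
  qed
  define d' where "d' = ?\<pi> \<circ> inv g2"
  have d'p: "d' permutes {1..b+(c+d)}" unfolding d'_def
    using permutes_compose[OF permutes_inv[OF g2p] pp] by (simp add: add.assoc)
  have ig: "inv g2 j \<in> {1..?N}" "g2 (inv g2 j) = j" if "j \<in> {1..?N}" for j
    using permutes_in_image[OF permutes_inv[OF g2p]] that permutes_inverses(1)[OF g2p] by auto
  have fx: "d' j = j" if j: "j \<in> {1..b}" for j
  proof -
    have jN: "j \<in> {1..?N}" using j by auto
    have "inv g2 j \<in> S" using g2v[OF ig(1)[OF jN]] ig(2)[OF jN] j by simp
    then have "?\<pi> (inv g2 j) = j" using g2S ig(2)[OF jN] by metis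
    then show ?thesis unfolding d'_def by simp
  qed
  have d'blk: "incr_on d' (b+(c+d)) B" if B: "B \<subseteq> {b+1..?N}" "incr_on ?\<pi> ?N B" for B
    unfolding incr_on_def
  proof (intro ballI impI)
    fix j j' assume j: "j \<in> {1..b+(c+d)}" "j' \<in> {1..b+(c+d)}" "d' j \<in> B" "d' j' \<in> B" "d' j < d' j'"
    have jN: "j \<in> {1..?N}" "j' \<in> {1..?N}" using j by auto
    let ?i = "inv g2 j" and ?i' = "inv g2 j'"
    have pv: "?\<pi> ?i \<in> B" "?\<pi> ?i' \<in> B" "?\<pi> ?i < ?\<pi> ?i'" using j(3-5) unfolding d'_def by auto
    have "?i < ?i'" using B(2) pv ig(1)[OF jN(1)] ig(1)[OF jN(2)] unfolding incr_on_def by blast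
    moreover have "?i \<notin> S" "?i' \<notin> S" using pv B(1) unfolding S_def by auto
    then have "g2 ?i \<in> {b+1..?N}" "g2 ?i' \<in> {b+1..?N}"
      using g2v ig jN by (metis atLeastAtMost_iff not_le Suc_eq_plus1 Suc_le_eq)+
    ultimately have "g2 ?i < g2 ?i'"
      using incr_mono[OF g2p g2inc2 ig(1)[OF jN(1)] ig(1)[OF jN(2)]] by blast
    then show "j < j'" using ig(2) jN by simp
  qed
  have d1: "incr_on d' (b+(c+d)) {b+1..b+c}" using d'blk[OF _ pi2] by auto
  have d2: "incr_on d' (b+(c+d)) {b+c+1..b+(c+d)}" using d'blk[OF _ pi3] by (simp add: add.assoc)
  obtain \<delta> where dSh: "\<delta> \<in> Sh c d" and deq: "perm_times b (c+d) id \<delta> = d'"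
    using Lfix[OF d'p fx d1 d2] by blast
  have "d' \<circ> g2 = ?\<pi>"
  proof
    fix x show "(d' \<circ> g2) x = ?\<pi> x" unfolding d'_def using permutes_inverses(2)[OF g2p] by simp
  qed
  then show ?thesis using g2Sh' dSh deq by blast
qed

lemma act_length[simp]: "length (pf_act h \<gamma>) = length h"
  unfolding pf_act_def by (simp del: upt_Suc)

lemma act_nth: "i < length h \<Longrightarrow> pf_act h \<gamma> ! i = h ! (\<gamma> (i+1) - 1)"
  unfolding pf_act_def by (simp add: nth_upt del: upt_Suc)

lemma act_nth1: assumes "i \<in> {1..length h}" shows "pf_act h \<gamma> ! (i - 1) = h ! (\<gamma> i - 1)"
proof -
  have a: "i - 1 < length h" and b: "i - 1 + 1 = i" using assms by auto
  show ?thesis using act_nth[OF a, of \<gamma>] unfolding b .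
qed

lemma act_eqI:
  assumes "length w = length h" "\<And>i. i \<in> {1..length h} \<Longrightarrow> w ! (i - 1) = h ! (\<gamma> i - 1)"
  shows "w = pf_act h \<gamma>"
proof (rule nth_equalityI)
  show "length w = length (pf_act h \<gamma>)" using assms by simp
  fix i assume "i < length w"
  then show "w ! i = pf_act h \<gamma> ! i" using assms(2)[of "i+1"] assms(1) act_nth by simp
qed

lemma act_mset:
  assumes p: "\<gamma> permutes {1..length h}"
  shows "mset (pf_act h \<gamma>) = mset h"
proof -
  let ?n = "length h"
  have "pf_act h \<gamma> = map (\<lambda>i. h ! (i - 1)) (map \<gamma> [1..<?n+1])" unfolding pf_act_def by (simp del: upt_Suc)
  then have "mset (pf_act h \<gamma>) = image_mset (\<lambda>i. h ! (i - 1)) (mset (map \<gamma> [1..<?n+1]))"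
    by (simp only: mset_map)
  also have "mset (map \<gamma> [1..<?n+1]) = mset [1..<?n+1]"
  proof -
    have d: "distinct (map \<gamma> [1..<?n+1])" using permutes_inj[OF p]
      by (simp add: distinct_map inj_on_subset[of \<gamma> UNIV] del: upt_Suc)
    have "set (map \<gamma> [1..<?n+1]) = \<gamma> ` {1..?n}" by (simp add: atLeastLessThanSuc_atLeastAtMost del: upt_Suc)
    also have "\<dots> = {1..?n}" using permutes_image[OF p] .
    finally have "set (map \<gamma> [1..<?n+1]) = set [1..<?n+1]" by (simp add: atLeastLessThanSuc_atLeastAtMost del: upt_Suc)
    then show ?thesis using d by (metis distinct_upt set_eq_iff_mset_eq_distinct)
  qed
  also have "image_mset (\<lambda>i. h ! (i - 1)) (mset [1..<?n+1]) = mset (map (\<lambda>i. h ! (i - 1)) [1..<?n+1])"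
    by (simp only: mset_map)
  also have "map (\<lambda>i. h ! (i - 1)) [1..<?n+1] = h" by (rule nth_equalityI) (auto simp: nth_upt simp del: upt_Suc)
  finally show ?thesis .
qed

lemma act_comp:
  assumes p: "\<beta> permutes {1..length w}"
  shows "pf_act (pf_act w \<alpha>) \<beta> = pf_act w (\<alpha> \<circ> \<beta>)"
proof (rule nth_equalityI)
  show "length (pf_act (pf_act w \<alpha>) \<beta>) = length (pf_act w (\<alpha> \<circ> \<beta>))" by simp
  fix i assume i: "i < length (pf_act (pf_act w \<alpha>) \<beta>)"
  then have b: "\<beta> (i+1) \<in> {1..length w}" using permutes_in_image[OF p] by simp
  have "pf_act (pf_act w \<alpha>) \<beta> ! i = pf_act w \<alpha> ! (\<beta> (i+1) - 1)" using i by (simp add: act_nth)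
  also have "\<dots> = w ! (\<alpha> (\<beta> (i+1)) - 1)" using act_nth1[OF b] by simp
  also have "\<dots> = pf_act w (\<alpha> \<circ> \<beta>) ! i" using i by (simp add: act_nth)
  finally show "pf_act (pf_act w \<alpha>) \<beta> ! i = pf_act w (\<alpha> \<circ> \<beta>) ! i" .
qed

lemma act_id[simp]: "pf_act w id = w"
  by (rule nth_equalityI) (auto simp: act_nth)

lemma times_length[simp]: "length (pf_times n f g) = length f + length g"
  unfolding pf_times_def by simp

lemma times_nth_lo: "i < length f \<Longrightarrow> pf_times n f g ! i = f ! i"
  unfolding pf_times_def by (simp add: nth_append)

lemma times_nth_hi: "length f \<le> i \<Longrightarrow> i < length f + length g \<Longrightarrow> pf_times n f g ! i = g ! (i - length f) + n"
  unfolding pf_times_def by (simp add: nth_append)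

lemma times_act_right:
  assumes f: "length f = n" and w: "length w = m" and p: "\<delta> permutes {1..m}"
  shows "pf_times n f (pf_act w \<delta>) = pf_act (pf_times n f w) (perm_times n m id \<delta>)"
proof (rule act_eqI)
  show "length (pf_times n f (pf_act w \<delta>)) = length (pf_times n f w)" by simp
  fix i assume i: "i \<in> {1..length (pf_times n f w)}"
  show "pf_times n f (pf_act w \<delta>) ! (i - 1) = pf_times n f w ! (perm_times n m id \<delta> i - 1)"
  proof (cases "i \<le> n")
    case True
    then show ?thesis using i f unfolding perm_times_def by (simp add: times_nth_lo)
  next
    case False
    then have "i - n \<in> {1..m}" using i f w mem_shift by simp
    then have im: "\<delta> (i - n) \<in> {1..m}" using permutes_in_image[OF p] by simp
    have "pf_times n f (pf_act w \<delta>) ! (i - 1) = pf_act w \<delta> ! (i - 1 - n) + n"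
      using False i f w by (simp add: times_nth_hi)
    also have "\<dots> = w ! (\<delta> (i - n) - 1) + n"
    proof -
      have a: "i - 1 - n < length w" and b: "i - 1 - n + 1 = i - n" using False i f w by auto
      show ?thesis using act_nth[OF a, of \<delta>] unfolding b by simp
    qed
    also have "\<dots> = pf_times n f w ! (\<delta> (i - n) + n - 1)"
    proof -
      have a: "length f \<le> \<delta> (i-n)+n-1" "\<delta> (i-n)+n-1 < length f + length w"
        and b: "\<delta> (i-n)+n-1 - length f = \<delta> (i-n) - 1" using im f w by auto
      show ?thesis using times_nth_hi[OF a, of n] unfolding b by simp
    qed
    also have "\<delta> (i - n) + n = perm_times n m id \<delta> i"
      using False i f w unfolding perm_times_def by simp
    finally show ?thesis .
  qed
qed

lemma times_act_left:
  assumes f: "length f = n" and g: "length g = m" and p: "\<alpha> permutes {1..n}"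
  shows "pf_times n (pf_act f \<alpha>) g = pf_act (pf_times n f g) (perm_times n m \<alpha> id)"
proof (rule act_eqI)
  show "length (pf_times n (pf_act f \<alpha>) g) = length (pf_times n f g)" by simp
  fix i assume i: "i \<in> {1..length (pf_times n f g)}"
  show "pf_times n (pf_act f \<alpha>) g ! (i - 1) = pf_times n f g ! (perm_times n m \<alpha> id i - 1)"
  proof (cases "i \<le> n")
    case True
    then have im: "\<alpha> i \<in> {1..n}" using permutes_in_image[OF p] i by simp
    have "pf_times n (pf_act f \<alpha>) g ! (i - 1) = pf_act f \<alpha> ! (i - 1)" using True i f by (simp add: times_nth_lo)
    also have "\<dots> = f ! (\<alpha> i - 1)" using act_nth1[of i f] True i f by simp
    also have "\<dots> = pf_times n f g ! (\<alpha> i - 1)"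
    proof -
      have "\<alpha> i - 1 < length f" using im f by auto
      then show ?thesis by (simp add: times_nth_lo)
    qed
    finally show ?thesis using True i unfolding perm_times_def by simp
  next
    case False
    then show ?thesis using i f g unfolding perm_times_def by (simp add: times_nth_hi)
  qed
qed

lemma times_assoc:
  "length f = n \<Longrightarrow> pf_times n f (pf_times m g k) = pf_times (n+m) (pf_times n f g) k"
  unfolding pf_times_def by (simp add: add.assoc o_def)

lemma act_inj:
  assumes p: "\<gamma> permutes {1..n}" and l: "length u = n" "length v = n" and e: "pf_act u \<gamma> = pf_act v \<gamma>"
  shows "u = v"
proof (rule nth_equalityI)
  show "length u = length v" using l by simp
  fix k assume k: "k < length u"
  let ?i = "inv \<gamma> (k+1)"
  have i: "?i \<in> {1..n}" using permutes_in_image[OF permutes_inv[OF p]] k l by simp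
  have g: "\<gamma> ?i = k + 1" using permutes_inverses(1)[OF p] by simp
  have "pf_act u \<gamma> ! (?i - 1) = pf_act v \<gamma> ! (?i - 1)" using e by simp
  then show "u ! k = v ! k" using act_nth1[of ?i u \<gamma>] act_nth1[of ?i v \<gamma>] i g l by simp
qed

definition cnt :: "nat list \<Rightarrow> nat \<Rightarrow> nat" where
  "cnt f b = length (filter (\<lambda>x. x \<le> b) f)"

lemma card_conv:
  assumes "length f = n"
  shows "card {i\<in>{1..n}. P (f ! (i - 1))} = length (filter P f)"
proof -
  have "{i\<in>{1..n}. P (f ! (i - 1))} = Suc ` {i. i < length f \<and> P (f ! i)}"
  proof (rule set_eqI)
    fix x
    show "x \<in> {i\<in>{1..n}. P (f ! (i - 1))} \<longleftrightarrow> x \<in> Suc ` {i. i < length f \<and> P (f ! i)}"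
      using assms by (cases x) auto
  qed
  then have "card {i\<in>{1..n}. P (f ! (i - 1))} = card {i. i < length f \<and> P (f ! i)}"
    by (simp add: card_image)
  then show ?thesis by (simp add: length_filter_conv_card)
qed

lemma breakpoint_iff: "length f = n \<Longrightarrow> is_breakpoint n f b \<longleftrightarrow> b \<le> n \<and> cnt f b = b"
  unfolding is_breakpoint_def cnt_def using card_conv[of f n "\<lambda>x. x \<le> b"] by simp

lemma cnt_mset: "mset f = mset g \<Longrightarrow> cnt f b = cnt g b"
  unfolding cnt_def by (metis mset_filter size_mset)

lemma sort_mset: assumes "mset f = mset g" shows "sort f = sort g"
proof (rule properties_for_sort)
  show "mset (sort g) = mset f" using assms by simp
  show "sorted (sort g)" by simp
qed

lemma is_pf_mset: assumes "mset f = mset g" shows "is_pf n f = is_pf n g"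
proof -
  have "sort f = sort g" "length f = length g" "set f = set g"
    using sort_mset[OF assms] mset_eq_length[OF assms] mset_eq_setD[OF assms] by auto
  then show ?thesis unfolding is_pf_def by simp
qed

lemma PF_mset: assumes "mset f = mset g" shows "f \<in> PF n \<longleftrightarrow> g \<in> PF n"
  unfolding PF_def using is_pf_mset[OF assms, of n] by simp

lemma PF_length: "f \<in> PF n \<Longrightarrow> length f = n"
  unfolding PF_def is_pf_def by simp

lemma act_PF: assumes "f \<in> PF n" "\<gamma> permutes {1..n}" shows "pf_act f \<gamma> \<in> PF n"
proof -
  have "\<gamma> permutes {1..length f}" using assms PF_length by simp
  then have "mset (pf_act f \<gamma>) = mset f" by (rule act_mset)
  then show ?thesis using PF_mset assms(1) by blast
qed

lemma PF_set: "f \<in> PF n \<Longrightarrow> set f \<subseteq> {1..n}"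
  unfolding PF_def is_pf_def by simp

lemma sort_app:
  fixes lo hi :: "nat list"
  assumes "set lo \<subseteq> {..b}"
  shows "sort (lo @ map (\<lambda>x. x + b) hi) = sort lo @ map (\<lambda>x. x + b) (sort hi)"
proof (rule properties_for_sort)
  show "mset (sort lo @ map (\<lambda>x. x + b) (sort hi)) = mset (lo @ map (\<lambda>x. x + b) hi)" by simp
  have "sorted (map (\<lambda>x. x + b) (sort hi))"
    unfolding sorted_iff_nth_mono
  proof (intro allI impI)
    fix i j assume ij: "i \<le> j" "j < length (map (\<lambda>x. x + b) (sort hi))"
    have "sort hi ! i \<le> sort hi ! j" using sorted_sort[of hi] ij unfolding sorted_iff_nth_mono by simp
    then show "map (\<lambda>x. x + b) (sort hi) ! i \<le> map (\<lambda>x. x + b) (sort hi) ! j" using ij by simp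
  qed
  moreover have "\<forall>x\<in>set (sort lo). \<forall>y\<in>set (map (\<lambda>x. x + b) (sort hi)). x \<le> y" using assms by auto
  ultimately show "sorted (sort lo @ map (\<lambda>x. x + b) (sort hi))" by (simp add: sorted_append)
qed

lemma times_PF:
  assumes f: "f \<in> PF n" and g: "g \<in> PF m"
  shows "pf_times n f g \<in> PF (n + m)"
proof -
  have lf: "length f = n" and sf: "set f \<subseteq> {1..n}" and of: "\<forall>i<n. sort f ! i \<le> i + 1"
    using f unfolding PF_def is_pf_def by auto
  have lg: "length g = m" and sg: "set g \<subseteq> {1..m}" and og: "\<forall>i<m. sort g ! i \<le> i + 1"
    using g unfolding PF_def is_pf_def by auto
  have srt: "sort (pf_times n f g) = sort f @ map (\<lambda>x. x + n) (sort g)"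
  proof -
    have "set f \<subseteq> {..n}" using sf by auto
    then show ?thesis unfolding pf_times_def using sort_app[of f n g] by simp
  qed
  have "\<forall>i<n+m. sort (pf_times n f g) ! i \<le> i + 1"
  proof (intro allI impI)
    fix i assume i: "i < n + m"
    show "sort (pf_times n f g) ! i \<le> i + 1"
    proof (cases "i < n")
      case True
      then show ?thesis using of lf unfolding srt by (simp add: nth_append)
    next
      case False
      then have "i - n < m" using i by simp
      then have "sort g ! (i - n) \<le> i - n + 1" using og by simp
      then show ?thesis using False lf lg i unfolding srt by (simp add: nth_append)
    qed
  qed
  moreover have "set (pf_times n f g) \<subseteq> {1..n+m}" using sf sg unfolding pf_times_def by auto
  ultimately show ?thesis using lf lg unfolding PF_def is_pf_def by simp
qed

lemma split_PF:
  assumes w: "w \<in> PF n" and ms: "mset w = mset (pf_times b lo hi)" and llo: "length lo = b"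
    and lhi: "length hi = n - b" and bn: "b \<le> n" and slo: "set lo \<subseteq> {..b}" and shi: "0 \<notin> set hi"
  shows "lo \<in> PF b" and "hi \<in> PF (n - b)"
proof -
  have lw: "length w = n" and sw: "set w \<subseteq> {1..n}" and ow: "\<forall>i<n. sort w ! i \<le> i + 1"
    using w unfolding PF_def is_pf_def by auto
  have srt: "sort w = sort lo @ map (\<lambda>x. x + b) (sort hi)"
    using sort_mset[OF ms] sort_app[OF slo, of hi] unfolding pf_times_def by simp
  have setw: "set w = set lo \<union> (\<lambda>x. x + b) ` set hi"
    using mset_eq_setD[OF ms] unfolding pf_times_def by simp
  have "\<forall>i<b. sort lo ! i \<le> i + 1"
  proof (intro allI impI)
    fix i assume i: "i < b"
    then have "sort w ! i = sort lo ! i" unfolding srt using llo by (simp add: nth_append)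
    moreover have "i < n" using i bn by simp
    then have "sort w ! i \<le> i + 1" using ow by blast
    ultimately show "sort lo ! i \<le> i + 1" by simp
  qed
  moreover have "set lo \<subseteq> {1..b}"
  proof
    fix x assume x: "x \<in> set lo"
    then have "x \<in> set w" using setw by simp
    then have "1 \<le> x" using sw by auto
    moreover have "x \<le> b" using x slo by auto
    ultimately show "x \<in> {1..b}" by simp
  qed
  ultimately show "lo \<in> PF b" using llo unfolding PF_def is_pf_def by simp
  have "\<forall>i<n-b. sort hi ! i \<le> i + 1"
  proof (intro allI impI)
    fix i assume i: "i < n - b"
    then have "sort w ! (b + i) = sort hi ! i + b" unfolding srt using llo lhi by (simp add: nth_append)
    moreover have "sort w ! (b + i) \<le> b + i + 1" using ow i by simp
    ultimately show "sort hi ! i \<le> i + 1" by simp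
  qed
  moreover have "set hi \<subseteq> {1..n-b}"
  proof
    fix x assume x: "x \<in> set hi"
    then have "x + b \<in> set w" using setw by auto
    then have "x + b \<le> n" using sw by auto
    moreover have "x \<noteq> 0"
    proof
      assume "x = 0" then show False using x shi by simp
    qed
    ultimately show "x \<in> {1..n-b}" by auto
  qed
  ultimately show "hi \<in> PF (n - b)" using lhi unfolding PF_def is_pf_def by simp
qed

definition bk :: "nat list \<Rightarrow> nat" where
  "bk f = (LEAST b. 0 < b \<and> cnt f b = b)"
definition Sset :: "nat list \<Rightarrow> nat set" where
  "Sset f = {i\<in>{1..length f}. f ! (i - 1) \<le> bk f}"
definition shf :: "nat list \<Rightarrow> nat \<Rightarrow> nat" where
  "shf f = shuf (bk f) (length f) (Sset f)"
definition lo :: "nat list \<Rightarrow> nat list" where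
  "lo f = map (\<lambda>j. f ! (inv (shf f) j - 1)) [1..<bk f + 1]"
definition hi :: "nat list \<Rightarrow> nat list" where
  "hi f = map (\<lambda>j. f ! (inv (shf f) (j + bk f) - 1) - bk f) [1..<length f - bk f + 1]"

lemma cnt_le: "cnt f b \<le> length f"
  unfolding cnt_def by simp

lemma gen_decomp:
  assumes lf: "length f = n" and cS: "cnt f b = b"
  defines "S \<equiv> {i\<in>{1..n}. f ! (i - 1) \<le> b}"
  defines "\<gamma> \<equiv> shuf b n S"
  defines "l \<equiv> map (\<lambda>j. f ! (inv \<gamma> j - 1)) [1..<b+1]"
  defines "h \<equiv> map (\<lambda>j. f ! (inv \<gamma> (j + b) - 1) - b) [1..<n-b+1]"
  shows "\<gamma> \<in> Sh b (n - b)" "f = pf_act (pf_times b l h) \<gamma>" "length l = b" "length h = n - b"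
    "set l \<subseteq> {..b}" "0 \<notin> set h"
proof -
  have bn: "b \<le> n" using cS cnt_le[of f b] lf by simp
  have SN: "S \<subseteq> {1..n}" unfolding S_def by auto
  have cardS: "card S = b" unfolding S_def using card_conv[OF lf, of "\<lambda>x. x \<le> b"] cS unfolding cnt_def by simp
  show gSh: "\<gamma> \<in> Sh b (n - b)" using shuf_Sh(1)[OF SN cardS] unfolding \<gamma>_def .
  have val: "\<gamma> i \<le> b \<longleftrightarrow> i \<in> S" if "i \<in> {1..n}" for i using shuf_Sh(2)[OF SN cardS that] unfolding \<gamma>_def .
  have gp: "\<gamma> permutes {1..n}" using gSh bn unfolding Sh_iff by simp
  have ig: "inv \<gamma> j \<in> {1..n}" "\<gamma> (inv \<gamma> j) = j" if "j \<in> {1..n}" for j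
    using permutes_in_image[OF permutes_inv[OF gp]] that permutes_inverses(1)[OF gp] by auto
  have gi: "inv \<gamma> (\<gamma> i) = i" for i using permutes_inverses(2)[OF gp] .
  have gim: "\<gamma> i \<in> {1..n}" if "i \<in> {1..n}" for i using permutes_in_image[OF gp] that by simp
  show ll: "length l = b" unfolding l_def by (simp del: upt_Suc)
  show lh: "length h = n - b" unfolding h_def by (simp del: upt_Suc)
  have lnth: "l ! (j - 1) = f ! (inv \<gamma> j - 1)" if "j \<in> {1..b}" for j
  proof -
    have "j - 1 < length [1..<b+1]" using that by (simp del: upt_Suc split: nat_diff_split)
    moreover have "[1..<b+1] ! (j - 1) = j" using that by (simp add: nth_upt del: upt_Suc)
    ultimately show ?thesis unfolding l_def by (simp del: upt_Suc)
  qed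
  have hnth: "h ! (j - 1) = f ! (inv \<gamma> (j + b) - 1) - b" if "j \<in> {1..n-b}" for j
  proof -
    have "j - 1 < n - b" using that by auto
    then have "j - 1 < length [1..<n-b+1]" by (simp del: upt_Suc)
    moreover have "[1..<n-b+1] ! (j - 1) = j" using that by (simp add: nth_upt del: upt_Suc)
    ultimately show ?thesis unfolding h_def by (simp del: upt_Suc)
  qed
  show "f = pf_act (pf_times b l h) \<gamma>"
  proof (rule act_eqI)
    show "length f = length (pf_times b l h)" using lf ll lh bn by simp
    fix i assume i: "i \<in> {1..length (pf_times b l h)}"
    then have iN: "i \<in> {1..n}" using ll lh bn by simp
    show "f ! (i - 1) = pf_times b l h ! (\<gamma> i - 1)"
    proof (cases "i \<in> S")
      case True
      then have le: "\<gamma> i \<le> b" using val iN by simp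
      have g1: "\<gamma> i \<in> {1..b}" using le gim[OF iN] by simp
      have "pf_times b l h ! (\<gamma> i - 1) = l ! (\<gamma> i - 1)"
        using g1 ll by (intro times_nth_lo) auto
      also have "\<dots> = f ! (i - 1)" using lnth[OF g1] gi by simp
      finally show ?thesis by simp
    next
      case False
      then have gt: "\<not> \<gamma> i \<le> b" using val iN by simp
      have fgt: "f ! (i - 1) > b" using False iN unfolding S_def by auto
      have g1: "\<gamma> i - b \<in> {1..n-b}" using gt gim[OF iN] by auto
      have a: "length l \<le> \<gamma> i - 1" "\<gamma> i - 1 < length l + length h" using gt gim[OF iN] ll lh by auto
      have b2: "\<gamma> i - 1 - length l = \<gamma> i - b - 1" using ll by simp
      have b3: "\<gamma> i - b + b = \<gamma> i" using gt by simp
      have "pf_times b l h ! (\<gamma> i - 1) = h ! (\<gamma> i - b - 1) + b"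
        using times_nth_hi[OF a, of b] unfolding b2 .
      also have "\<dots> = f ! (i - 1) - b + b" using hnth[OF g1] unfolding b3 gi by simp
      also have "\<dots> = f ! (i - 1)" using fgt by simp
      finally show ?thesis by simp
    qed
  qed
  show "set l \<subseteq> {..b}"
  proof
    fix x assume "x \<in> set l"
    then obtain k where k: "k < length l" "x = l ! k" by (auto simp: in_set_conv_nth)
    then have j: "k + 1 \<in> {1..b}" using ll by simp
    have jn: "k + 1 \<in> {1..n}" using j bn by auto
    have "\<gamma> (inv \<gamma> (k+1)) \<le> b" using ig(2)[OF jn] j by simp
    then have "inv \<gamma> (k+1) \<in> S" using val ig(1)[OF jn] by simp
    then have "f ! (inv \<gamma> (k+1) - 1) \<le> b" unfolding S_def by simp
    then show "x \<in> {..b}" using lnth[OF j] k by simp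
  qed
  show "0 \<notin> set h"
  proof
    assume "0 \<in> set h"
    then obtain k where k: "k < length h" "0 = h ! k" by (auto simp: in_set_conv_nth)
    then have j: "k + 1 \<in> {1..n-b}" using lh by simp
    have jn: "k + 1 + b \<in> {1..n}" using j bn by auto
    have "\<not> \<gamma> (inv \<gamma> (k+1+b)) \<le> b" using ig(2)[OF jn] by simp
    then have "inv \<gamma> (k+1+b) \<notin> S" using val ig(1)[OF jn] by simp
    then have "f ! (inv \<gamma> (k+1+b) - 1) > b" using ig(1)[OF jn] unfolding S_def by auto
    then show False using hnth[OF j] k by simp
  qed
qed

lemma cnt_times: "cnt (pf_times b l h) b' = cnt l b' + length (filter (\<lambda>x. x + b \<le> b') h)"
  unfolding cnt_def pf_times_def by (simp add: o_def)

lemma cnt_times_low: assumes "b' \<le> b" "0 \<notin> set h" shows "cnt (pf_times b l h) b' = cnt l b'"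
proof -
  have "\<forall>x\<in>set h. \<not> x + b \<le> b'"
  proof
    fix x assume "x \<in> set h"
    then have "x \<noteq> 0" using assms(2) by (metis)
    then show "\<not> x + b \<le> b'" using assms(1) by simp
  qed
  then show ?thesis unfolding cnt_times by (subst filter_False) auto
qed

lemma cnt_full: "set l \<subseteq> {..b} \<Longrightarrow> cnt l b = length l"
  unfolding cnt_def by (subst filter_True) auto

lemma bk_props:
  assumes f: "f \<in> PF n" and n: "1 \<le> n"
  shows "0 < bk f" "cnt f (bk f) = bk f" "bk f \<le> n" "\<And>b'. 0 < b' \<Longrightarrow> b' < bk f \<Longrightarrow> cnt f b' \<noteq> b'"
proof -
  have "set f \<subseteq> {..n}" using PF_set[OF f] by auto
  then have "cnt f n = n" using cnt_full[of f n] PF_length[OF f] by simp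
  then have ex: "0 < n \<and> cnt f n = n" using n by simp
  show "0 < bk f" "cnt f (bk f) = bk f" using LeastI[of "\<lambda>b. 0 < b \<and> cnt f b = b", OF ex] unfolding bk_def by auto
  show "bk f \<le> n" using Least_le[of "\<lambda>b. 0 < b \<and> cnt f b = b", OF ex] unfolding bk_def .
  show "cnt f b' \<noteq> b'" if "0 < b'" "b' < bk f" for b'
    using not_less_Least[of b' "\<lambda>b. 0 < b \<and> cnt f b = b"] that unfolding bk_def by auto
qed

lemma PPF_iff: "f \<in> PPF n \<longleftrightarrow> f \<in> PF n \<and> 1 \<le> n \<and> bk f = n"
proof
  assume a: "f \<in> PPF n"
  then have f: "f \<in> PF n" and n: "1 \<le> n" and pr: "\<And>b. is_breakpoint n f b \<Longrightarrow> b = 0 \<or> b = n"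
    unfolding PPF_def PF_def by auto
  have "is_breakpoint n f (bk f)" using bk_props[OF f n] breakpoint_iff[OF PF_length[OF f]] by simp
  then have "bk f = 0 \<or> bk f = n" by (rule pr)
  then have "bk f = n" using bk_props(1)[OF f n] by auto
  then show "f \<in> PF n \<and> 1 \<le> n \<and> bk f = n" using f n by simp
next
  assume a: "f \<in> PF n \<and> 1 \<le> n \<and> bk f = n"
  then have f: "f \<in> PF n" and n: "1 \<le> n" and bn: "bk f = n" by auto
  have "b = 0 \<or> b = n" if "is_breakpoint n f b" for b
  proof -
    have b: "b \<le> n" "cnt f b = b" using that breakpoint_iff[OF PF_length[OF f]] by auto
    show ?thesis using bk_props(4)[OF f n, of b] b bn by linarith
  qed
  then show "f \<in> PPF n" using f n unfolding PPF_def PF_def by auto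
qed

lemma decomp:
  assumes f: "f \<in> PF n" and n: "1 \<le> n" and lt: "bk f < n"
  shows "shf f \<in> Sh (bk f) (n - bk f)" "lo f \<in> PPF (bk f)" "hi f \<in> PF (n - bk f)"
    "f = pf_act (pf_times (bk f) (lo f) (hi f)) (shf f)"
proof -
  let ?b = "bk f"
  have lf: "length f = n" using PF_length[OF f] .
  have cS: "cnt f ?b = ?b" using bk_props[OF f n] by simp
  note gd = gen_decomp[OF lf cS]
  have eqs: "shf f = shuf ?b n {i\<in>{1..n}. f ! (i - 1) \<le> ?b}"
    "lo f = map (\<lambda>j. f ! (inv (shf f) j - 1)) [1..<?b+1]"
    "hi f = map (\<lambda>j. f ! (inv (shf f) (j + ?b) - 1) - ?b) [1..<n-?b+1]"
    unfolding shf_def Sset_def lo_def hi_def lf by simp_all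
  show sh: "shf f \<in> Sh ?b (n - ?b)" using gd(1) unfolding eqs .
  show fe: "f = pf_act (pf_times ?b (lo f) (hi f)) (shf f)" using gd(2) unfolding eqs(2,3) unfolding eqs(1) .
  have ll: "length (lo f) = ?b" and lh: "length (hi f) = n - ?b" and sl: "set (lo f) \<subseteq> {..?b}"
    and sh0: "0 \<notin> set (hi f)"
    using gd(3-6) unfolding eqs(2,3) unfolding eqs(1) by auto
  have bn: "?b \<le> n" using bk_props[OF f n] by simp
  have gp: "shf f permutes {1..length (pf_times ?b (lo f) (hi f))}"
    using sh unfolding Sh_iff using ll lh bn by simp
  have ms: "mset f = mset (pf_times ?b (lo f) (hi f))"
    using act_mset[OF gp] fe by simp
  note sp = split_PF[OF f ms ll lh bn sl sh0]
  show "hi f \<in> PF (n - ?b)" using sp(2) .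
  have "b' = 0 \<or> b' = ?b" if "is_breakpoint ?b (lo f) b'" for b'
  proof -
    have b': "b' \<le> ?b" "cnt (lo f) b' = b'" using that breakpoint_iff[OF ll] by auto
    have "cnt f b' = cnt (lo f) b'" using cnt_mset[OF ms] cnt_times_low[OF b'(1) sh0] by simp
    then show ?thesis using bk_props(4)[OF f n, of b'] b' by linarith
  qed
  then show "lo f \<in> PPF ?b" using sp(1) bk_props(1)[OF f n] unfolding PPF_def PF_def by auto
qed

lemma uniq:
  assumes p: "p \<in> PPF b" and r: "r \<in> PF m" and m: "1 \<le> m" and g: "\<gamma> \<in> Sh b m"
    and h: "h = pf_act (pf_times b p r) \<gamma>"
  shows "bk h = b" "shf h = \<gamma>" "lo h = p" "hi h = r" "length h = b + m"
proof -
  have pf: "p \<in> PF b" and b1: "1 \<le> b" and bkp: "bk p = b" using p unfolding PPF_iff by auto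
  have lp: "length p = b" using PF_length[OF pf] .
  have lr: "length r = m" using PF_length[OF r] .
  have sp: "set p \<subseteq> {1..b}" using PF_set[OF pf] .
  have sr: "set r \<subseteq> {1..m}" using PF_set[OF r] .
  have r0: "0 \<notin> set r" using sr by auto
  have gp: "\<gamma> permutes {1..b+m}" using g unfolding Sh_iff by simp
  have gp': "\<gamma> permutes {1..length (pf_times b p r)}" using gp lp lr by simp
  have ms: "mset h = mset (pf_times b p r)" using act_mset[OF gp'] h by simp
  show lh: "length h = b + m" using h lp lr by simp
  have sp': "set p \<subseteq> {..b}" using sp by auto
  have cb: "cnt h b = b" using cnt_mset[OF ms] cnt_times_low[OF order_refl r0] cnt_full[OF sp'] lp by simp
  have cl: "cnt h b' \<noteq> b'" if "0 < b'" "b' < b" for b'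
    using cnt_mset[OF ms] cnt_times_low[of b' b r p] that r0 bk_props(4)[OF pf b1, of b'] bkp by simp
  show bkh: "bk h = b" unfolding bk_def
  proof (rule Least_equality)
    show "0 < b \<and> cnt h b = b" using b1 cb by simp
    show "b \<le> y" if "0 < y \<and> cnt h y = y" for y using cl[of y] that by linarith
  qed
  have gim: "\<gamma> i \<in> {1..b+m}" if "i \<in> {1..b+m}" for i using permutes_in_image[OF gp] that by simp
  have hv: "h ! (i - 1) = pf_times b p r ! (\<gamma> i - 1)" if "i \<in> {1..b+m}" for i
    using act_nth1[of i "pf_times b p r" \<gamma>] that h lp lr by simp
  have pt_lo: "pf_times b p r ! (k - 1) = p ! (k - 1)" if "k \<in> {1..b}" for k
    using that lp by (intro times_nth_lo) auto
  have pt_hi: "pf_times b p r ! (k - 1) = r ! (k - b - 1) + b" if "k \<in> {b+1..b+m}" for k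
  proof -
    have a: "length p \<le> k - 1" "k - 1 < length p + length r" using that lp lr by auto
    have "k - 1 - length p = k - b - 1" using lp by simp
    then show ?thesis using times_nth_hi[OF a, of b] by simp
  qed
  have Seq: "Sset h = {i\<in>{1..b+m}. \<gamma> i \<le> b}"
  proof -
    have "h ! (i - 1) \<le> b \<longleftrightarrow> \<gamma> i \<le> b" if i: "i \<in> {1..b+m}" for i
    proof (cases "\<gamma> i \<le> b")
      case True
      then have k: "\<gamma> i \<in> {1..b}" using gim[OF i] by simp
      have "p ! (\<gamma> i - 1) \<in> set p" using k lp by (intro nth_mem) auto
      then show ?thesis using hv[OF i] pt_lo[OF k] True sp by auto
    next
      case False
      then have k: "\<gamma> i \<in> {b+1..b+m}" using gim[OF i] by simp
      have "r ! (\<gamma> i - b - 1) \<in> set r" using k lr by (intro nth_mem) auto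
      then have "r ! (\<gamma> i - b - 1) \<ge> 1" using sr by auto
      then show ?thesis using hv[OF i] pt_hi[OF k] False by auto
    qed
    then show ?thesis unfolding Sset_def bkh lh by auto
  qed
  show sh: "shf h = \<gamma>" unfolding shf_def bkh lh Seq using Sh_shuf[OF g] by simp
  have ig: "inv \<gamma> j \<in> {1..b+m}" "\<gamma> (inv \<gamma> j) = j" if "j \<in> {1..b+m}" for j
    using permutes_in_image[OF permutes_inv[OF gp]] that permutes_inverses(1)[OF gp] by auto
  show "lo h = p"
  proof (rule nth_equalityI)
    show "length (lo h) = length p" unfolding lo_def bkh using lp by (simp del: upt_Suc)
    fix k assume k: "k < length (lo h)"
    then have k1: "k + 1 \<in> {1..b}" unfolding lo_def bkh by (simp del: upt_Suc)
    then have k2: "k + 1 \<in> {1..b+m}" by auto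
    have "lo h ! k = h ! (inv \<gamma> (k+1) - 1)" unfolding lo_def bkh sh using k1 by (simp add: nth_upt del: upt_Suc)
    also have "\<dots> = pf_times b p r ! (k + 1 - 1)" using hv[OF ig(1)[OF k2]] ig(2)[OF k2] by simp
    also have "\<dots> = p ! k" using pt_lo[OF k1] by simp
    finally show "lo h ! k = p ! k" .
  qed
  show "hi h = r"
  proof (rule nth_equalityI)
    show "length (hi h) = length r" unfolding hi_def bkh lh using lr by (simp del: upt_Suc)
    fix k assume k: "k < length (hi h)"
    then have k1: "k + 1 + b \<in> {b+1..b+m}" unfolding hi_def bkh lh by (simp del: upt_Suc)
    then have k2: "k + 1 + b \<in> {1..b+m}" by auto
    have "hi h ! k = h ! (inv \<gamma> (k+1+b) - 1) - b" unfolding hi_def bkh sh lh using k1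
      by (simp add: nth_upt del: upt_Suc)
    also have "\<dots> = pf_times b p r ! (k + 1 + b - 1) - b" using hv[OF ig(1)[OF k2]] ig(2)[OF k2] by simp
    also have "\<dots> = r ! k" using pt_hi[OF k1] by simp
    finally show "hi h ! k = r ! k" .
  qed
qed

lemma finite_PF: "finite (PF n)"
proof (rule finite_subset)
  show "PF n \<subseteq> {xs. set xs \<subseteq> {1..n} \<and> length xs = n}" unfolding PF_def is_pf_def by auto
  show "finite {xs. set xs \<subseteq> {1..n} \<and> length xs = (n::nat)}" by (rule finite_lists_length_eq) simp
qed

lemma PQ_vs: "vector_space (PQ_scale :: 'k::field \<Rightarrow> _)"
  unfolding vector_space_def PQ_scale_def by (auto simp: fun_eq_iff algebra_simps)

lemma PQ_module: "module (PQ_scale :: 'k::field \<Rightarrow> _)"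
  using PQ_vs module_iff_vector_space by blast

lemma PQ_subspace: "module.subspace (PQ_scale :: 'k::field \<Rightarrow> _) (PQ_V n)"
  unfolding module.subspace_def[OF PQ_module]
proof (intro conjI ballI allI)
  show "0 \<in> PQ_V n" unfolding PQ_V_def by simp
  fix x y :: "nat list \<Rightarrow> 'k" assume x: "x \<in> PQ_V n" and y: "y \<in> PQ_V n"
  show "x + y \<in> PQ_V n" unfolding PQ_V_def mem_Collect_eq
  proof (intro allI impI)
    fix w assume "(x + y) w \<noteq> 0"
    then have "x w \<noteq> 0 \<or> y w \<noteq> 0" by auto
    then show "1 \<le> n \<and> w \<in> PF n" using x y unfolding PQ_V_def by auto
  qed
next
  fix c and x :: "nat list \<Rightarrow> 'k" assume x: "x \<in> PQ_V n"
  then show "PQ_scale c x \<in> PQ_V n" unfolding PQ_V_def PQ_scale_def by auto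
qed

lemma PQ_V_0: "x \<in> PQ_V 0 \<Longrightarrow> x = 0"
  unfolding PQ_V_def by (auto simp: fun_eq_iff)

lemma PQ_mult_split:
  "PQ_mult n m \<gamma> x y h = (\<Sum>f\<in>PF n. \<Sum>g\<in>PF m. if pf_act (pf_times n f g) \<gamma> = h then x f * y g else 0)"
  unfolding PQ_mult_def sum.cartesian_product by (simp add: case_prod_beta)

lemma PQ_mult_add1: "PQ_mult n m \<gamma> (x + x') y = PQ_mult n m \<gamma> x y + PQ_mult n m \<gamma> x' y"
  unfolding PQ_mult_def by (auto simp: fun_eq_iff sum.distrib[symmetric] algebra_simps intro!: sum.cong)

lemma PQ_mult_add2: "PQ_mult n m \<gamma> x (y + y') = PQ_mult n m \<gamma> x y + PQ_mult n m \<gamma> x y'"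
  unfolding PQ_mult_def by (auto simp: fun_eq_iff sum.distrib[symmetric] algebra_simps intro!: sum.cong)

lemma PQ_mult_sc1: "PQ_mult n m \<gamma> (PQ_scale c x) y = PQ_scale c (PQ_mult n m \<gamma> x y)"
  unfolding PQ_mult_def PQ_scale_def by (auto simp: fun_eq_iff sum_distrib_left algebra_simps intro!: sum.cong)

lemma PQ_mult_sc2: "PQ_mult n m \<gamma> x (PQ_scale c y) = PQ_scale c (PQ_mult n m \<gamma> x y)"
  unfolding PQ_mult_def PQ_scale_def by (auto simp: fun_eq_iff sum_distrib_left algebra_simps intro!: sum.cong)

lemma Sh_perm: "\<gamma> \<in> Sh n m \<Longrightarrow> \<gamma> permutes {1..n+m}"
  unfolding Sh_def by simp

lemma prod_PF: "f \<in> PF n \<Longrightarrow> g \<in> PF m \<Longrightarrow> \<gamma> \<in> Sh n m \<Longrightarrow> pf_act (pf_times n f g) \<gamma> \<in> PF (n+m)"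
  using act_PF[OF times_PF Sh_perm] by blast

lemma PQ_closed:
  assumes x: "x \<in> PQ_V n" and y: "y \<in> PQ_V m" and g: "\<gamma> \<in> Sh n m"
  shows "PQ_mult n m \<gamma> x y \<in> PQ_V (n + m)"
  unfolding PQ_V_def mem_Collect_eq
proof (intro allI impI)
  fix h assume "PQ_mult n m \<gamma> x y h \<noteq> 0"
  then obtain f where f: "f \<in> PF n"
    "(\<Sum>g\<in>PF m. if pf_act (pf_times n f g) \<gamma> = h then x f * y g else 0) \<noteq> 0"
    unfolding PQ_mult_split using sum.not_neutral_contains_not_neutral by blast
  then obtain g' where g': "g' \<in> PF m" "(if pf_act (pf_times n f g') \<gamma> = h then x f * y g' else 0) \<noteq> 0"
    using sum.not_neutral_contains_not_neutral by blast
  then have fg: "f \<in> PF n" "g' \<in> PF m" "pf_act (pf_times n f g') \<gamma> = h" "x f * y g' \<noteq> 0"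
    using f by (auto split: if_splits)
  then have "x f \<noteq> 0" by auto
  then have "1 \<le> n" using x unfolding PQ_V_def by auto
  then show "1 \<le> n + m \<and> h \<in> PF (n + m)" using prod_PF[OF fg(1,2) g] fg(3) by simp
qed

lemma push:
  fixes v :: "'a \<Rightarrow> 'k::comm_ring_1"
  assumes U: "finite U" and A: "finite A" and c: "\<And>a. a \<in> A \<Longrightarrow> c a \<in> U"
  shows "(\<Sum>u\<in>U. if P u then w * (\<Sum>a\<in>A. if c a = u then v a else 0) else 0)
       = (\<Sum>a\<in>A. if P (c a) then w * v a else 0)"
proof -
  have "(\<Sum>u\<in>U. if P u then w * (\<Sum>a\<in>A. if c a = u then v a else 0) else 0)
      = (\<Sum>u\<in>U. \<Sum>a\<in>A. if c a = u then (if P u then w * v a else 0) else 0)"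
    apply (rule sum.cong[OF refl])
    subgoal for u by (cases "P u") (simp_all add: sum_distrib_left if_distrib cong: if_cong)
    done
  also have "\<dots> = (\<Sum>a\<in>A. \<Sum>u\<in>U. if c a = u then (if P u then w * v a else 0) else 0)"
    by (rule sum.swap)
  also have "\<dots> = (\<Sum>a\<in>A. if P (c a) then w * v a else 0)"
    using c U by (intro sum.cong) (auto simp: sum.delta)
  finally show ?thesis .
qed

lemma comb_assoc:
  assumes lf: "length f = n" and lg: "length g = m" and lk: "length k = r"
    and g: "\<gamma> \<in> Sh n (m + r)" and d: "\<delta> \<in> Sh m r" and s: "\<sigma> \<in> Sh n m" and l: "lam \<in> Sh (n + m) r"
    and eq: "perm_times n (m + r) id \<delta> \<circ> \<gamma> = perm_times (n + m) r \<sigma> id \<circ> lam"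
  shows "pf_act (pf_times n f (pf_act (pf_times m g k) \<delta>)) \<gamma>
       = pf_act (pf_times (n + m) (pf_act (pf_times n f g) \<sigma>) k) lam"
proof -
  have dp: "\<delta> permutes {1..m+r}" using Sh_perm[OF d] .
  have sp: "\<sigma> permutes {1..n+m}" using Sh_perm[OF s] .
  have gp: "\<gamma> permutes {1..length (pf_times n f (pf_times m g k))}"
    using Sh_perm[OF g] lf lg lk by (simp add: add.assoc)
  have lp: "lam permutes {1..length (pf_times (n+m) (pf_times n f g) k)}"
    using Sh_perm[OF l] lf lg lk by simp
  have "pf_act (pf_times n f (pf_act (pf_times m g k) \<delta>)) \<gamma>
      = pf_act (pf_act (pf_times n f (pf_times m g k)) (perm_times n (m + r) id \<delta>)) \<gamma>"
    using times_act_right[OF lf _ dp, of "pf_times m g k"] lg lk by simp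
  also have "\<dots> = pf_act (pf_times n f (pf_times m g k)) (perm_times n (m + r) id \<delta> \<circ> \<gamma>)"
    by (rule act_comp[OF gp])
  also have "\<dots> = pf_act (pf_times (n+m) (pf_times n f g) k) (perm_times (n + m) r \<sigma> id \<circ> lam)"
    unfolding eq times_assoc[OF lf] ..
  also have "\<dots> = pf_act (pf_act (pf_times (n+m) (pf_times n f g) k) (perm_times (n + m) r \<sigma> id)) lam"
    by (rule act_comp[OF lp, symmetric])
  also have "\<dots> = pf_act (pf_times (n + m) (pf_act (pf_times n f g) \<sigma>) k) lam"
    using times_act_left[of "pf_times n f g" "n+m" k r \<sigma>] lf lg lk sp by simp
  finally show ?thesis .
qed

lemma PQ_assoc:
  assumes g: "\<gamma> \<in> Sh n (m + r)" and d: "\<delta> \<in> Sh m r" and s: "\<sigma> \<in> Sh n m" and l: "lam \<in> Sh (n + m) r"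
    and eq: "perm_times n (m + r) id \<delta> \<circ> \<gamma> = perm_times (n + m) r \<sigma> id \<circ> lam"
  shows "PQ_mult n (m + r) \<gamma> x (PQ_mult m r \<delta> y z) = PQ_mult (n + m) r lam (PQ_mult n m \<sigma> x y) (z :: nat list \<Rightarrow> 'k::field)"
proof
  fix h
  let ?T = "\<lambda>f g k. pf_act (pf_times n f (pf_act (pf_times m g k) \<delta>)) \<gamma>"
  have T: "?T f g' k = pf_act (pf_times (n + m) (pf_act (pf_times n f g') \<sigma>) k) lam"
    if "f \<in> PF n" "g' \<in> PF m" "k \<in> PF r" for f g' k
    using comb_assoc[OF PF_length PF_length PF_length g d s l eq] that by blast
  have "PQ_mult n (m + r) \<gamma> x (PQ_mult m r \<delta> y z) h
      = (\<Sum>f\<in>PF n. \<Sum>u\<in>PF (m+r). if pf_act (pf_times n f u) \<gamma> = h then x f *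
           (\<Sum>p\<in>PF m \<times> PF r. if pf_act (pf_times m (fst p) (snd p)) \<delta> = u then y (fst p) * z (snd p) else 0) else 0)"
    unfolding PQ_mult_split[of n "m+r"] PQ_mult_def[of m r] ..
  also have "\<dots> = (\<Sum>f\<in>PF n. \<Sum>p\<in>PF m \<times> PF r. if ?T f (fst p) (snd p) = h then x f * (y (fst p) * z (snd p)) else 0)"
    by (intro sum.cong refl push) (auto simp: finite_PF intro: prod_PF[OF _ _ d])
  also have "\<dots> = (\<Sum>f\<in>PF n. \<Sum>g'\<in>PF m. \<Sum>k\<in>PF r. if ?T f g' k = h then x f * y g' * z k else 0)"
    by (intro sum.cong refl) (simp add: sum.cartesian_product case_prod_beta mult.assoc cong: if_cong)
  finally have L: "PQ_mult n (m + r) \<gamma> x (PQ_mult m r \<delta> y z) h = \<dots>" .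
  let ?T2 = "\<lambda>f g k. pf_act (pf_times (n + m) (pf_act (pf_times n f g) \<sigma>) k) lam"
  have "PQ_mult (n + m) r lam (PQ_mult n m \<sigma> x y) z h
      = (\<Sum>u\<in>PF (n+m). \<Sum>k\<in>PF r. if pf_act (pf_times (n+m) u k) lam = h then
           (\<Sum>p\<in>PF n \<times> PF m. if pf_act (pf_times n (fst p) (snd p)) \<sigma> = u then x (fst p) * y (snd p) else 0) * z k else 0)"
    unfolding PQ_mult_split[of "n+m" r] PQ_mult_def[of n m] ..
  also have "\<dots> = (\<Sum>k\<in>PF r. \<Sum>u\<in>PF (n+m). if pf_act (pf_times (n+m) u k) lam = h then z k *
           (\<Sum>p\<in>PF n \<times> PF m. if pf_act (pf_times n (fst p) (snd p)) \<sigma> = u then x (fst p) * y (snd p) else 0) else 0)"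
    by (subst sum.swap) (simp add: mult.commute cong: if_cong)
  also have "\<dots> = (\<Sum>k\<in>PF r. \<Sum>p\<in>PF n \<times> PF m. if ?T2 (fst p) (snd p) k = h then z k * (x (fst p) * y (snd p)) else 0)"
    by (intro sum.cong refl push) (auto simp: finite_PF intro: prod_PF[OF _ _ s])
  also have "\<dots> = (\<Sum>k\<in>PF r. \<Sum>f\<in>PF n. \<Sum>g'\<in>PF m. if ?T2 f g' k = h then x f * y g' * z k else 0)"
    by (intro sum.cong refl) (simp add: sum.cartesian_product case_prod_beta mult_ac cong: if_cong)
  also have "\<dots> = (\<Sum>f\<in>PF n. \<Sum>g'\<in>PF m. \<Sum>k\<in>PF r. if ?T2 f g' k = h then x f * y g' * z k else 0)"
    by (subst sum.swap) (subst sum.swap, rule refl)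
  also have "\<dots> = (\<Sum>f\<in>PF n. \<Sum>g'\<in>PF m. \<Sum>k\<in>PF r. if ?T f g' k = h then x f * y g' * z k else 0)"
    using T by (intro sum.cong refl) simp
  finally show "PQ_mult n (m + r) \<gamma> x (PQ_mult m r \<delta> y z) h = PQ_mult (n + m) r lam (PQ_mult n m \<sigma> x y) z h"
    using L by simp
qed

lemma sum_fun_apply: "(\<Sum>a\<in>A. F a) w = (\<Sum>a\<in>A. (F a w :: 'b::comm_monoid_add))"
  by (induction A rule: infinite_finite_induct) auto

lemma PQ_shuffle_alg: "shuffle_alg (PQ_scale :: 'k::field \<Rightarrow> _) PQ_V PQ_mult"
  unfolding shuffle_alg_def
proof (intro conjI allI impI ballI)
  show "vector_space (PQ_scale :: 'k::field \<Rightarrow> _)" by (rule PQ_vs)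
  fix n show "module.subspace (PQ_scale :: 'k::field \<Rightarrow> _) (PQ_V n)" by (rule PQ_subspace)
next
  fix n m \<gamma> and x y :: "nat list \<Rightarrow> 'k"
  assume a: "\<gamma> \<in> Sh n m" "x \<in> PQ_V n" "y \<in> PQ_V m"
  show "PQ_mult n m \<gamma> x y \<in> PQ_V (n + m)" by (rule PQ_closed[OF a(2,3,1)])
next
  fix n m \<gamma> and y :: "nat list \<Rightarrow> 'k"
  show "lin_on PQ_scale PQ_scale (PQ_V n) (\<lambda>x. PQ_mult n m \<gamma> x y)"
    unfolding lin_on_def using PQ_mult_add1 PQ_mult_sc1 by blast
next
  fix n m \<gamma> and x :: "nat list \<Rightarrow> 'k"
  show "lin_on PQ_scale PQ_scale (PQ_V m) (\<lambda>y. PQ_mult n m \<gamma> x y)"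
    unfolding lin_on_def using PQ_mult_add2 PQ_mult_sc2 by blast
next
  fix n m r \<gamma> \<delta> \<sigma> lam and x y z :: "nat list \<Rightarrow> 'k"
  assume "\<gamma> \<in> Sh n (m + r) \<and> \<delta> \<in> Sh m r \<and> \<sigma> \<in> Sh n m \<and> lam \<in> Sh (n + m) r \<and>
       perm_times n (m + r) id \<delta> \<circ> \<gamma> = perm_times (n + m) r \<sigma> id \<circ> lam"
  then show "PQ_mult n (m + r) \<gamma> x (PQ_mult m r \<delta> y z) = PQ_mult (n + m) r lam (PQ_mult n m \<sigma> x y) z"
    using PQ_assoc by blast
qed

lemma lin_zero:
  assumes m1: "module sc1" and m2: "module sc2" and S: "module.subspace sc1 S" and F: "lin_on sc1 sc2 S F"
  shows "F 0 = 0"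
proof -
  have z: "0 \<in> S" using module.subspace_0[OF m1 S] .
  have "sc1 0 0 = 0" using module.scale_zero_left[OF m1] .
  then have "F 0 = F (sc1 0 0)" by simp
  also have "\<dots> = sc2 0 (F 0)" using F z unfolding lin_on_def by blast
  also have "\<dots> = 0" using module.scale_zero_left[OF m2] .
  finally show ?thesis .
qed

lemma lin_sum:
  assumes m1: "module sc1" and m2: "module sc2" and S: "module.subspace sc1 S" and F: "lin_on sc1 sc2 S F"
    and fin: "finite A" and u: "\<And>a. a \<in> A \<Longrightarrow> u a \<in> S"
  shows "F (\<Sum>a\<in>A. u a) = (\<Sum>a\<in>A. F (u a))"
  using fin u
proof (induction A rule: finite_induct)
  case empty
  then show ?case using lin_zero[OF m1 m2 S F] by simp
next
  case (insert a A)
  have s: "(\<Sum>a\<in>A. u a) \<in> S" using module.subspace_sum[OF m1 S] insert by blast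
  have "F (\<Sum>a\<in>insert a A. u a) = F (u a + (\<Sum>a\<in>A. u a))" using insert by simp
  also have "\<dots> = F (u a) + F (\<Sum>a\<in>A. u a)" using F s insert unfolding lin_on_def by blast
  finally show ?case using insert by simp
qed

lemma basis_V: "f \<in> PF n \<Longrightarrow> 1 \<le> n \<Longrightarrow> PQ_basis n f \<in> PQ_V n"
  unfolding PQ_basis_def PQ_V_def by auto

lemma basis_mult:
  assumes f: "f \<in> PF n" and g: "g \<in> PF m"
  shows "PQ_mult n m \<gamma> (PQ_basis n f) (PQ_basis m g) = (PQ_basis (n+m) (pf_act (pf_times n f g) \<gamma>) :: _ \<Rightarrow> 'k::field)"
proof
  fix h
  let ?T = "\<lambda>f' g'. if pf_act (pf_times n f' g') \<gamma> = h then 1 else (0::'k)"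
  have "(PQ_mult n m \<gamma> (PQ_basis n f) (PQ_basis m g) h :: 'k)
     = (\<Sum>f'\<in>PF n. if f' = f then (\<Sum>g'\<in>PF m. if g' = g then ?T f' g' else 0) else 0)"
    unfolding PQ_mult_split PQ_basis_def
  proof (intro sum.cong refl)
    fix f' assume "f' \<in> PF n"
    show "(\<Sum>g'\<in>PF m. if pf_act (pf_times n f' g') \<gamma> = h then (if f' = f then 1 else 0) * (if g' = g then 1 else 0) else 0)
        = (if f' = f then (\<Sum>g'\<in>PF m. if g' = g then ?T f' g' else 0) else (0::'k))"
      by (cases "f' = f") (auto intro!: sum.cong sum.neutral)
  qed
  also have "\<dots> = ?T f g" using f g by (simp add: sum.delta finite_PF)
  finally show "PQ_mult n m \<gamma> (PQ_basis n f) (PQ_basis m g) h = (PQ_basis (n+m) (pf_act (pf_times n f g) \<gamma>) h :: 'k)"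
    unfolding PQ_basis_def by auto
qed

lemma expand_basis:
  assumes x: "x \<in> PQ_V n"
  shows "x = (\<Sum>f\<in>PF n. PQ_scale (x f) (PQ_basis n f :: _ \<Rightarrow> 'k::field))"
proof
  fix w
  have "(\<Sum>f\<in>PF n. PQ_scale (x f) (PQ_basis n f :: _ \<Rightarrow> 'k)) w = (\<Sum>f\<in>PF n. if f = w then x w else 0)"
    unfolding PQ_scale_def PQ_basis_def sum_fun_apply by (intro sum.cong refl) auto
  also have "\<dots> = (if w \<in> PF n then x w else 0)" by (simp add: sum.delta finite_PF)
  also have "\<dots> = x w" using x unfolding PQ_V_def by auto
  finally show "x w = (\<Sum>f\<in>PF n. PQ_scale (x f) (PQ_basis n f :: _ \<Rightarrow> 'k)) w" by simp
qed

context
  fixes mu2 :: "nat \<Rightarrow> nat \<Rightarrow> (nat \<Rightarrow> nat) \<Rightarrow> 'b \<Rightarrow> 'b \<Rightarrow> 'b::ab_group_add"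
    and phi :: "nat \<Rightarrow> nat list \<Rightarrow> 'b"
begin

function Phib :: "nat list \<Rightarrow> 'b" where
  "Phib f = (if f = [] then 0 else if bk f = length f then phi (length f) f
             else if length (hi f) < length f
                  then mu2 (bk f) (length f - bk f) (shf f) (phi (bk f) (lo f)) (Phib (hi f))
                  else 0)"
  by auto
termination by (relation "measure length") auto

end

declare Phib.simps[simp del]

locale tgt =
  fixes sc2 :: "'k::field \<Rightarrow> 'b::ab_group_add \<Rightarrow> 'b"
    and V2 :: "nat \<Rightarrow> 'b set"
    and mu2 :: "nat \<Rightarrow> nat \<Rightarrow> (nat \<Rightarrow> nat) \<Rightarrow> 'b \<Rightarrow> 'b \<Rightarrow> 'b"
    and phi :: "nat \<Rightarrow> nat list \<Rightarrow> 'b"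
  assumes SA: "shuffle_alg sc2 V2 mu2"
    and PH: "\<And>n g. g \<in> PPF n \<Longrightarrow> phi n g \<in> V2 n"
begin

lemma md: "module sc2"
  using SA unfolding shuffle_alg_def module_iff_vector_space by simp

lemma sub: "module.subspace sc2 (V2 n)"
  using SA unfolding shuffle_alg_def by simp

lemma closed: "\<gamma> \<in> Sh n m \<Longrightarrow> x \<in> V2 n \<Longrightarrow> y \<in> V2 m \<Longrightarrow> mu2 n m \<gamma> x y \<in> V2 (n + m)"
  using SA unfolding shuffle_alg_def by blast

lemma lin1: "\<gamma> \<in> Sh n m \<Longrightarrow> y \<in> V2 m \<Longrightarrow> lin_on sc2 sc2 (V2 n) (\<lambda>x. mu2 n m \<gamma> x y)"
  using SA unfolding shuffle_alg_def by blast

lemma lin2: "\<gamma> \<in> Sh n m \<Longrightarrow> x \<in> V2 n \<Longrightarrow> lin_on sc2 sc2 (V2 m) (\<lambda>y. mu2 n m \<gamma> x y)"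
  using SA unfolding shuffle_alg_def by blast

lemma assoc2:
  "\<gamma> \<in> Sh n (m + r) \<Longrightarrow> \<delta> \<in> Sh m r \<Longrightarrow> \<sigma> \<in> Sh n m \<Longrightarrow> lam \<in> Sh (n + m) r \<Longrightarrow>
   perm_times n (m + r) id \<delta> \<circ> \<gamma> = perm_times (n + m) r \<sigma> id \<circ> lam \<Longrightarrow>
   x \<in> V2 n \<Longrightarrow> y \<in> V2 m \<Longrightarrow> z \<in> V2 r \<Longrightarrow>
   mu2 n (m + r) \<gamma> x (mu2 m r \<delta> y z) = mu2 (n + m) r lam (mu2 n m \<sigma> x y) z"
  using SA unfolding shuffle_alg_def by blast

abbreviation "P \<equiv> Phib mu2 phi"

lemma P_prime: "f \<in> PPF n \<Longrightarrow> P f = phi n f"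
proof -
  assume f: "f \<in> PPF n"
  then have fp: "f \<in> PF n" and n1: "1 \<le> n" and bn: "bk f = n" unfolding PPF_iff by auto
  have l: "length f = n" using PF_length[OF fp] .
  then have "f \<noteq> []" "bk f = length f" "length f = n" using n1 bn by auto
  then show ?thesis by (subst Phib.simps) simp
qed

lemma P_dec:
  assumes f: "f \<in> PF n" and n: "1 \<le> n" and lt: "bk f < n"
  shows "P f = mu2 (bk f) (n - bk f) (shf f) (phi (bk f) (lo f)) (P (hi f))"
proof -
  have lf: "length f = n" using PF_length[OF f] .
  have "hi f \<in> PF (n - bk f)" using decomp(3)[OF f n lt] .
  then have lh: "length (hi f) < length f" using PF_length bk_props(1)[OF f n] lf lt by fastforce
  have "f \<noteq> []" using lf n by auto
  then show ?thesis using lt lf lh by (subst Phib.simps) simp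
qed

lemma P_prod_prime:
  assumes p: "p \<in> PPF b" and r: "r \<in> PF m" and m: "1 \<le> m" and g: "\<gamma> \<in> Sh b m"
  shows "P (pf_act (pf_times b p r) \<gamma>) = mu2 b m \<gamma> (phi b p) (P r)"
proof -
  let ?h = "pf_act (pf_times b p r) \<gamma>"
  note u = uniq[OF p r m g refl]
  have hPF: "?h \<in> PF (b + m)" using prod_PF[OF _ r g] p unfolding PPF_iff by auto
  have b1: "1 \<le> b" using p unfolding PPF_iff by auto
  have "P ?h = mu2 (bk ?h) (b + m - bk ?h) (shf ?h) (phi (bk ?h) (lo ?h)) (P (hi ?h))"
    using P_dec[OF hPF] u m b1 by simp
  then show ?thesis using u by simp
qed

lemma P_in: "f \<in> PF n \<Longrightarrow> 1 \<le> n \<Longrightarrow> P f \<in> V2 n"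
proof (induction n arbitrary: f rule: less_induct)
  case (less n)
  show ?case
  proof (cases "bk f = n")
    case True
    then have "f \<in> PPF n" using less.prems unfolding PPF_iff by simp
    then show ?thesis using P_prime PH by simp
  next
    case False
    then have lt: "bk f < n" using bk_props(3)[OF less.prems] by simp
    note d = decomp[OF less.prems lt]
    have b0: "0 < bk f" using bk_props(1)[OF less.prems] .
    have "P (hi f) \<in> V2 (n - bk f)" using less.IH[OF _ d(3)] b0 lt by simp
    moreover have "phi (bk f) (lo f) \<in> V2 (bk f)" using PH d(2) by simp
    ultimately have "mu2 (bk f) (n - bk f) (shf f) (phi (bk f) (lo f)) (P (hi f)) \<in> V2 (bk f + (n - bk f))"
      using closed[OF d(1)] by simp
    then show ?thesis using P_dec[OF less.prems lt] lt by simp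
  qed
qed

lemma KEY:
  "f \<in> PF n \<Longrightarrow> g \<in> PF m \<Longrightarrow> 1 \<le> n \<Longrightarrow> 1 \<le> m \<Longrightarrow> \<gamma> \<in> Sh n m \<Longrightarrow>
   P (pf_act (pf_times n f g) \<gamma>) = mu2 n m \<gamma> (P f) (P g)"
proof (induction n arbitrary: f g m \<gamma> rule: less_induct)
  case (less n)
  note f = less.prems(1) and g = less.prems(2) and n = less.prems(3) and m = less.prems(4) and gS = less.prems(5)
  show ?case
  proof (cases "bk f = n")
    case True
    then have fp: "f \<in> PPF n" using f n unfolding PPF_iff by simp
    show ?thesis using P_prod_prime[OF fp g m gS] P_prime[OF fp] by simp
  next
    case False
    then have lt: "bk f < n" using bk_props(3)[OF f n] by simp
    let ?b = "bk f" let ?c = "n - bk f"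
    note d = decomp[OF f n lt]
    have b0: "0 < ?b" using bk_props(1)[OF f n] .
    have nbc: "n = ?b + ?c" using lt by simp
    have c1: "1 \<le> ?c" using lt by simp
    have gS': "\<gamma> \<in> Sh (?b + ?c) m" using gS nbc by simp
    obtain \<gamma>2 \<delta> where g2: "\<gamma>2 \<in> Sh ?b (?c + m)" and dl: "\<delta> \<in> Sh ?c m"
      and eq: "perm_times ?b (?c + m) id \<delta> \<circ> \<gamma>2 = perm_times (?b + ?c) m (shf f) id \<circ> \<gamma>"
      using factor[OF d(1) gS'] by blast
    have lp: "length (lo f) = ?b" using PF_length d(2) unfolding PPF_iff by auto
    have lr: "length (hi f) = ?c" using PF_length[OF d(3)] .
    have lg: "length g = m" using PF_length[OF g] .
    have "pf_act (pf_times ?b (lo f) (pf_act (pf_times ?c (hi f) g) \<delta>)) \<gamma>2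
        = pf_act (pf_times (?b + ?c) (pf_act (pf_times ?b (lo f) (hi f)) (shf f)) g) \<gamma>"
      by (rule comb_assoc[OF lp lr lg g2 dl d(1) gS' eq])
    also have "\<dots> = pf_act (pf_times n f g) \<gamma>" using d(4) nbc by simp
    finally have heq: "pf_act (pf_times n f g) \<gamma> = pf_act (pf_times ?b (lo f) (pf_act (pf_times ?c (hi f) g) \<delta>)) \<gamma>2" by simp
    have rg: "pf_act (pf_times ?c (hi f) g) \<delta> \<in> PF (?c + m)" using prod_PF[OF d(3) g dl] .
    have "P (pf_act (pf_times n f g) \<gamma>) = mu2 ?b (?c + m) \<gamma>2 (phi ?b (lo f)) (P (pf_act (pf_times ?c (hi f) g) \<delta>))"
      unfolding heq using P_prod_prime[OF d(2) rg _ g2] m by simp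
    also have "P (pf_act (pf_times ?c (hi f) g) \<delta>) = mu2 ?c m \<delta> (P (hi f)) (P g)"
      using less.IH[OF _ d(3) g c1 m dl] b0 lt by simp
    also have "mu2 ?b (?c + m) \<gamma>2 (phi ?b (lo f)) (mu2 ?c m \<delta> (P (hi f)) (P g))
             = mu2 (?b + ?c) m \<gamma> (mu2 ?b ?c (shf f) (phi ?b (lo f)) (P (hi f))) (P g)"
      by (rule assoc2[OF g2 dl d(1) gS' eq PH[OF d(2)] P_in[OF d(3) c1] P_in[OF g m]])
    also have "mu2 ?b ?c (shf f) (phi ?b (lo f)) (P (hi f)) = P f" using P_dec[OF f n lt] by simp
    finally show ?thesis using nbc by simp
  qed
qed

end

context tgt
begin

definition Phi :: "nat \<Rightarrow> (nat list \<Rightarrow> 'k) \<Rightarrow> 'b" where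
  "Phi n x = (\<Sum>f\<in>PF n. sc2 (x f) (P f))"

lemma sc0: "sc2 0 v = 0"
  using module.scale_zero_left[OF md] .

lemma scsc: "sc2 a (sc2 b v) = sc2 (a * b) v"
  using module.scale_scale[OF md] .

lemma sc_if: "sc2 (if c then a else 0) v = (if c then sc2 a v else 0)"
  by (simp add: sc0)

lemma V_nz: "x \<in> PQ_V n \<Longrightarrow> x f \<noteq> 0 \<Longrightarrow> 1 \<le> n \<and> f \<in> PF n"
  unfolding PQ_V_def by auto

lemma term_in: "x \<in> PQ_V n \<Longrightarrow> f \<in> PF n \<Longrightarrow> sc2 (x f) (P f) \<in> V2 n"
proof (cases "x f = 0")
  case True
  then show ?thesis using sc0 module.subspace_0[OF md sub] by simp
next
  case False
  assume x: "x \<in> PQ_V n" and f: "f \<in> PF n"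
  then have "1 \<le> n" using V_nz False by blast
  then show ?thesis using module.subspace_scale[OF md sub P_in[OF f]] by simp
qed

lemma Phi_in: assumes "x \<in> PQ_V n" shows "Phi n x \<in> V2 n"
  unfolding Phi_def by (rule module.subspace_sum[OF md sub], rule term_in[OF assms])

lemma Phi_lin: "lin_on PQ_scale sc2 (PQ_V n) (Phi n)"
  unfolding lin_on_def
proof (intro conjI ballI allI)
  fix x y :: "nat list \<Rightarrow> 'k" assume "x \<in> PQ_V n" "y \<in> PQ_V n"
  show "Phi n (x + y) = Phi n x + Phi n y"
    unfolding Phi_def by (simp add: module.scale_left_distrib[OF md] sum.distrib)
next
  fix c and x :: "nat list \<Rightarrow> 'k" assume "x \<in> PQ_V n"
  show "Phi n (PQ_scale c x) = sc2 c (Phi n x)"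
    unfolding Phi_def PQ_scale_def by (simp add: module.scale_sum_right[OF md] scsc)
qed

lemma Phi_basis: "g \<in> PPF n \<Longrightarrow> Phi n (PQ_basis n g) = phi n g"
proof -
  assume g: "g \<in> PPF n"
  then have gP: "g \<in> PF n" unfolding PPF_iff by simp
  have "Phi n (PQ_basis n g) = (\<Sum>f\<in>PF n. if f = g then P f else 0)"
    unfolding Phi_def PQ_basis_def by (intro sum.cong refl) (simp add: sc0 module.scale_one[OF md])
  also have "\<dots> = P g" using gP by (simp add: sum.delta finite_PF)
  finally show ?thesis using P_prime[OF g] by simp
qed

lemma mu_zero1: "\<gamma> \<in> Sh n m \<Longrightarrow> w \<in> V2 m \<Longrightarrow> mu2 n m \<gamma> 0 w = 0"
  using lin_zero[OF md md sub lin1] by blast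

lemma mu_zero2: "\<gamma> \<in> Sh n m \<Longrightarrow> v \<in> V2 n \<Longrightarrow> mu2 n m \<gamma> v 0 = 0"
  using lin_zero[OF md md sub lin2] by blast

lemma Phi_mult:
  assumes gS: "\<gamma> \<in> Sh n m" and x: "x \<in> PQ_V n" and y: "y \<in> PQ_V m"
  shows "Phi (n + m) (PQ_mult n m \<gamma> x y) = mu2 n m \<gamma> (Phi n x) (Phi m y)"
proof -
  let ?A = "\<lambda>f g. pf_act (pf_times n f g) \<gamma>"
  have "Phi (n + m) (PQ_mult n m \<gamma> x y)
      = (\<Sum>h\<in>PF (n+m). \<Sum>f\<in>PF n. \<Sum>g\<in>PF m. if ?A f g = h then sc2 (x f * y g) (P h) else 0)"
    unfolding Phi_def PQ_mult_split
    by (intro sum.cong refl) (simp add: module.scale_sum_left[OF md] sc_if)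
  also have "\<dots> = (\<Sum>f\<in>PF n. \<Sum>g\<in>PF m. \<Sum>h\<in>PF (n+m). if ?A f g = h then sc2 (x f * y g) (P h) else 0)"
    by (subst sum.swap[where A="PF (n+m)" and B="PF n"]) (rule sum.cong[OF refl], rule sum.swap)
  also have "\<dots> = (\<Sum>f\<in>PF n. \<Sum>g\<in>PF m. sc2 (x f * y g) (P (?A f g)))"
    using prod_PF[OF _ _ gS] by (intro sum.cong refl) (simp add: sum.delta finite_PF)
  also have "\<dots> = (\<Sum>f\<in>PF n. \<Sum>g\<in>PF m. mu2 n m \<gamma> (sc2 (x f) (P f)) (sc2 (y g) (P g)))"
  proof (intro sum.cong refl)
    fix f g assume f: "f \<in> PF n" and g: "g \<in> PF m"
    have tf: "sc2 (x f) (P f) \<in> V2 n" using term_in[OF x f] .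
    have tg: "sc2 (y g) (P g) \<in> V2 m" using term_in[OF y g] .
    show "sc2 (x f * y g) (P (?A f g)) = mu2 n m \<gamma> (sc2 (x f) (P f)) (sc2 (y g) (P g))"
    proof (cases "x f = 0 \<or> y g = 0")
      case True
      then show ?thesis
      proof
        assume "x f = 0"
        then show ?thesis using mu_zero1[OF gS tg] sc0 by simp
      next
        assume "y g = 0"
        then show ?thesis using mu_zero2[OF gS tf] sc0 by simp
      qed
    next
      case False
      then have n1: "1 \<le> n" and m1: "1 \<le> m" using V_nz x y by blast+
      have Pf: "P f \<in> V2 n" using P_in[OF f n1] .
      have Pg: "P g \<in> V2 m" using P_in[OF g m1] .
      have "mu2 n m \<gamma> (sc2 (x f) (P f)) (sc2 (y g) (P g)) = sc2 (x f) (mu2 n m \<gamma> (P f) (sc2 (y g) (P g)))"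
        using lin1[OF gS tg] Pf unfolding lin_on_def by blast
      also have "mu2 n m \<gamma> (P f) (sc2 (y g) (P g)) = sc2 (y g) (mu2 n m \<gamma> (P f) (P g))"
        using lin2[OF gS Pf] Pg unfolding lin_on_def by blast
      also have "mu2 n m \<gamma> (P f) (P g) = P (?A f g)" using KEY[OF f g n1 m1 gS] by simp
      finally show ?thesis by (simp add: scsc)
    qed
  qed
  also have "\<dots> = (\<Sum>f\<in>PF n. mu2 n m \<gamma> (sc2 (x f) (P f)) (Phi m y))"
  proof (intro sum.cong refl)
    fix f assume f: "f \<in> PF n"
    show "(\<Sum>g\<in>PF m. mu2 n m \<gamma> (sc2 (x f) (P f)) (sc2 (y g) (P g))) = mu2 n m \<gamma> (sc2 (x f) (P f)) (Phi m y)"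
      unfolding Phi_def using lin_sum[OF md md sub lin2[OF gS term_in[OF x f]] finite_PF, where u="\<lambda>g. sc2 (y g) (P g)"]
        term_in[OF y] by simp
  qed
  also have "\<dots> = mu2 n m \<gamma> (Phi n x) (Phi m y)"
    unfolding Phi_def[of n] using lin_sum[OF md md sub lin1[OF gS Phi_in[OF y]] finite_PF, where u="\<lambda>f. sc2 (x f) (P f)"]
      term_in[OF x] by simp
  finally show ?thesis .
qed

lemma Phi_hom: "shuffle_hom PQ_scale PQ_V PQ_mult sc2 V2 mu2 Phi"
  unfolding shuffle_hom_def using Phi_in Phi_lin Phi_mult by blast

lemma Phi_unique:
  assumes H: "shuffle_hom PQ_scale PQ_V PQ_mult sc2 V2 mu2 Psi"
    and B: "\<And>n g. g \<in> PPF n \<Longrightarrow> Psi n (PQ_basis n g) = phi n g"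
  shows "x \<in> PQ_V n \<Longrightarrow> Psi n x = Phi n x"
proof -
  have Hin: "\<And>n x. x \<in> PQ_V n \<Longrightarrow> Psi n x \<in> V2 n" and Hlin: "\<And>n. lin_on PQ_scale sc2 (PQ_V n) (Psi n)"
    and Hmu: "\<And>n m \<gamma> x y. \<gamma> \<in> Sh n m \<Longrightarrow> x \<in> PQ_V n \<Longrightarrow> y \<in> PQ_V m \<Longrightarrow>
        Psi (n + m) (PQ_mult n m \<gamma> x y) = mu2 n m \<gamma> (Psi n x) (Psi m y)"
    using H unfolding shuffle_hom_def by blast+
  have U1: "Psi n (PQ_basis n f) = P f" if "f \<in> PF n" "1 \<le> n" for n f
    using that
  proof (induction n arbitrary: f rule: less_induct)
    case (less n)
    show ?case
    proof (cases "bk f = n")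
      case True
      then have fp: "f \<in> PPF n" using less.prems unfolding PPF_iff by simp
      then show ?thesis using B P_prime by simp
    next
      case False
      then have lt: "bk f < n" using bk_props(3)[OF less.prems] by simp
      let ?b = "bk f" let ?c = "n - bk f"
      note d = decomp[OF less.prems lt]
      have b0: "0 < ?b" using bk_props(1)[OF less.prems] .
      have nbc: "n = ?b + ?c" using lt by simp
      have c1: "1 \<le> ?c" using lt by simp
      have lpP: "lo f \<in> PF ?b" using d(2) unfolding PPF_iff by simp
      have "PQ_basis n f = (PQ_basis (?b + ?c) (pf_act (pf_times ?b (lo f) (hi f)) (shf f)) :: _ \<Rightarrow> 'k)"
        using d(4) nbc by simp
      also have "\<dots> = PQ_mult ?b ?c (shf f) (PQ_basis ?b (lo f)) (PQ_basis ?c (hi f))"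
        by (rule basis_mult[OF lpP d(3), symmetric])
      finally have "Psi n (PQ_basis n f) = Psi (?b + ?c) (PQ_mult ?b ?c (shf f) (PQ_basis ?b (lo f)) (PQ_basis ?c (hi f)))"
        using nbc by simp
      also have "\<dots> = mu2 ?b ?c (shf f) (Psi ?b (PQ_basis ?b (lo f))) (Psi ?c (PQ_basis ?c (hi f)))"
        using Hmu[OF d(1) basis_V[OF lpP] basis_V[OF d(3) c1]] b0 by simp
      also have "Psi ?b (PQ_basis ?b (lo f)) = phi ?b (lo f)" using B[OF d(2)] .
      also have "Psi ?c (PQ_basis ?c (hi f)) = P (hi f)" using less.IH[OF _ d(3) c1] b0 lt by simp
      also have "mu2 ?b ?c (shf f) (phi ?b (lo f)) (P (hi f)) = P f" using P_dec[OF less.prems lt] by simp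
      finally show ?thesis .
    qed
  qed
  assume x: "x \<in> PQ_V n"
  have tin: "PQ_scale (x f) (PQ_basis n f) \<in> PQ_V n" for f
    unfolding PQ_V_def PQ_scale_def PQ_basis_def using V_nz[OF x] by auto
  have "Psi n x = Psi n (\<Sum>f\<in>PF n. PQ_scale (x f) (PQ_basis n f))"
    using expand_basis[OF x] by simp
  also have "\<dots> = (\<Sum>f\<in>PF n. Psi n (PQ_scale (x f) (PQ_basis n f)))"
    using lin_sum[OF PQ_module md PQ_subspace Hlin finite_PF tin] by simp
  also have "\<dots> = Phi n x"
    unfolding Phi_def
  proof (intro sum.cong refl)
    fix f assume f: "f \<in> PF n"
    show "Psi n (PQ_scale (x f) (PQ_basis n f)) = sc2 (x f) (P f)"
    proof (cases "x f = 0")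
      case True
      have "PQ_scale (x f) (PQ_basis n f) = (0 :: _ \<Rightarrow> 'k)" using True unfolding PQ_scale_def by auto
      then show ?thesis using True lin_zero[OF PQ_module md PQ_subspace Hlin] sc0 by simp
    next
      case False
      then have n1: "1 \<le> n" using V_nz[OF x] by blast
      have "Psi n (PQ_scale (x f) (PQ_basis n f)) = sc2 (x f) (Psi n (PQ_basis n f))"
        using Hlin[of n] basis_V[OF f n1] unfolding lin_on_def by blast
      then show ?thesis using U1[OF f n1] by simp
    qed
  qed
  finally show ?thesis .
qed

end

theorem mainTheorem2:
  shows "shuffle_alg (PQ_scale :: 'k::field \<Rightarrow> _) PQ_V PQ_mult \<and>
         free_shuffle_alg_on TYPE('b::ab_group_add)
           (PQ_scale :: 'k::field \<Rightarrow> _) PQ_V PQ_mult PPF PQ_basis"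
proof -
  have SA: "shuffle_alg (PQ_scale :: 'k::field \<Rightarrow> _) PQ_V PQ_mult" by (rule PQ_shuffle_alg)
  have "free_shuffle_alg_on TYPE('b::ab_group_add) (PQ_scale :: 'k::field \<Rightarrow> _) PQ_V PQ_mult PPF PQ_basis"
    unfolding free_shuffle_alg_on_def
  proof (intro conjI allI impI ballI)
    show "shuffle_alg (PQ_scale :: 'k::field \<Rightarrow> _) PQ_V PQ_mult" by (rule SA)
    show "PPF 0 = {}" unfolding PPF_def by auto
  next
    fix n g assume "g \<in> PPF n"
    then show "(PQ_basis n g :: _ \<Rightarrow> 'k) \<in> PQ_V n" using basis_V unfolding PPF_iff by blast
  next
    fix sc2 :: "'k \<Rightarrow> 'b \<Rightarrow> 'b" and V2 mu2 and \<phi> :: "nat \<Rightarrow> nat list \<Rightarrow> 'b"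
    assume a: "shuffle_alg sc2 V2 mu2 \<and> (\<forall>n. \<forall>g\<in>PPF n. \<phi> n g \<in> V2 n)"
    interpret T: tgt sc2 V2 mu2 \<phi> using a by unfold_locales auto
    show "\<exists>\<Phi>. shuffle_hom PQ_scale PQ_V PQ_mult sc2 V2 mu2 \<Phi> \<and>
              (\<forall>n. \<forall>g\<in>PPF n. \<Phi> n (PQ_basis n g) = \<phi> n g) \<and>
              (\<forall>\<Psi>. shuffle_hom PQ_scale PQ_V PQ_mult sc2 V2 mu2 \<Psi> \<and>
                    (\<forall>n. \<forall>g\<in>PPF n. \<Psi> n (PQ_basis n g) = \<phi> n g) \<longrightarrow>
                    (\<forall>n. \<forall>x\<in>PQ_V n. \<Psi> n x = \<Phi> n x))"
    proof (intro exI conjI allI ballI impI)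
      show "shuffle_hom PQ_scale PQ_V PQ_mult sc2 V2 mu2 T.Phi" by (rule T.Phi_hom)
    next
      fix n g assume "g \<in> PPF n"
      then show "T.Phi n (PQ_basis n g) = \<phi> n g" by (rule T.Phi_basis)
    next
      fix \<Psi> n and x :: "nat list \<Rightarrow> 'k"
      assume h: "shuffle_hom PQ_scale PQ_V PQ_mult sc2 V2 mu2 \<Psi> \<and> (\<forall>n. \<forall>g\<in>PPF n. \<Psi> n (PQ_basis n g) = \<phi> n g)"
        and x: "x \<in> PQ_V n"
      show "\<Psi> n x = T.Phi n x" using T.Phi_unique[of \<Psi>, OF _ _ x] h by blast
    qed
  qed
  then show ?thesis using SA by simp
qed

end
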